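(* Suppose $k_n\sim n^a$ for some $0<a<1$, and for some $0\le\delta<1-a$ there exist $\theta_{0n}=(\theta_{10n},\dots,\theta_{K(n)0n})$ with $\|f_{\theta_{0n}}-f_0\|_2=o(n^{-\delta})$ (A1). Let $h(\theta_n)=\int(f_{\theta_n}(\mathbf x)-f_0(\mathbf x))^2d\mathbf x$ and let $\tau>0$ be fixed. Then $\int h(\theta_n)q(\theta_n)d\theta_n=o(n^{-\delta})$ provided either 1. $\sum_{i=1}^{K(n)}\theta_{i0n}^2=o(n^{1-\delta})$ (A2) and $q(\theta_n)=\prod_{i=1}^{K(n)}\sqrt{n/(2\pi\tau^2)}\,e^{-n(\theta_{in}-\theta_{i0n})^2/(2\tau^2)}$; or 2. $\sum_{i=1}^{K(n)}\theta_{i0n}^2=O(n^v)$ for some $v\ge1$ (A3) and $q(\theta_n)=\prod_{i=1}^{K(n)}\sqrt{n^{v+1}/(2\pi\tau^2)}\,e^{-n^{v+1}(\theta_{in}-\theta_{i0n})^2/(2\tau^2)}$.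
   Context: $f_0$ is square integrable on $[0,1]^p$ ($p$ fixed); integrals in $\mathbf x$ are over $[0,1]^p$ and $\|\cdot\|_2$ is the $L_2([0,1]^p)$ norm. $\psi(u)=1/(1+e^{-u})$, $f_{\theta_n}(\mathbf x)=\beta_0+\sum_{j=1}^{k_n}\beta_j\psi(\gamma_{j0}+\sum_{h=1}^p\gamma_{jh}x_h)$, $\theta_n=(\theta_{1n},\dots,\theta_{K(n)n})$ the vector of all network parameters and $K(n)$ its length. *)

theory Defs
  imports "HOL-Probability.Probability" "HOL-Library.Landau_Symbols"
begin

definition psi :: "real \<Rightarrow> real" where
  "psi u = 1 / (1 + exp (- u))"

text \<open>Number of network parameters K(n) for k hidden units and input dimension p:
  beta_0, beta_1..beta_k, and gamma_{j0},...,gamma_{jp} for j = 1..k.\<close>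
definition nn_K :: "nat \<Rightarrow> nat \<Rightarrow> nat" where
  "nn_K p k = 1 + k * (p + 2)"

text \<open>Parameter layout in theta (indices 0 .. nn_K p k - 1):
  beta_0 = theta 0; beta_j = theta j (1 \<le> j \<le> k);
  gamma_{jh} = theta (k + (j-1)*(p+1) + 1 + h) (1 \<le> j \<le> k, 0 \<le> h \<le> p).
  Inputs x are indexed by {..<p}: x_h = x (h-1).\<close>
definition nn_f :: "nat \<Rightarrow> nat \<Rightarrow> (nat \<Rightarrow> real) \<Rightarrow> (nat \<Rightarrow> real) \<Rightarrow> real" where
  "nn_f p k \<theta> x = \<theta> 0 + (\<Sum>j=1..k. \<theta> j *
      psi (\<theta> (k + (j - 1) * (p + 1) + 1)
           + (\<Sum>h=1..p. \<theta> (k + (j - 1) * (p + 1) + 1 + h) * x (h - 1))))"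

definition cube_measure :: "nat \<Rightarrow> (nat \<Rightarrow> real) measure" where
  "cube_measure p = PiM {..<p} (\<lambda>_. lborel)"

definition unit_cube :: "nat \<Rightarrow> (nat \<Rightarrow> real) set" where
  "unit_cube p = PiE {..<p} (\<lambda>_. {0..1})"

definition sq_L2_dist :: "nat \<Rightarrow> ((nat \<Rightarrow> real) \<Rightarrow> real) \<Rightarrow> ((nat \<Rightarrow> real) \<Rightarrow> real) \<Rightarrow> real" where
  "sq_L2_dist p g f0 = (LINT x : unit_cube p | cube_measure p. (g x - f0 x)\<^sup>2)"

definition square_integrable_cube :: "nat \<Rightarrow> ((nat \<Rightarrow> real) \<Rightarrow> real) \<Rightarrow> bool" where
  "square_integrable_cube p f0 \<longleftrightarrow>
     set_borel_measurable (cube_measure p) (unit_cube p) f0 \<and>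
     set_integrable (cube_measure p) (unit_cube p) (\<lambda>x. (f0 x)\<^sup>2)"

definition nn_h :: "nat \<Rightarrow> nat \<Rightarrow> ((nat \<Rightarrow> real) \<Rightarrow> real) \<Rightarrow> (nat \<Rightarrow> real) \<Rightarrow> real" where
  "nn_h p k f0 \<theta> = sq_L2_dist p (nn_f p k \<theta>) f0"

definition gauss_prod :: "real \<Rightarrow> real \<Rightarrow> nat \<Rightarrow> (nat \<Rightarrow> real) \<Rightarrow> (nat \<Rightarrow> real) \<Rightarrow> real" where
  "gauss_prod s \<tau> K c \<theta> =
     (\<Prod>i<K. sqrt (s / (2 * pi * \<tau>\<^sup>2)) * exp (- s * (\<theta> i - c i)\<^sup>2 / (2 * \<tau>\<^sup>2)))"

definition param_measure :: "nat \<Rightarrow> (nat \<Rightarrow> real) measure" where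
  "param_measure K = PiM {..<K} (\<lambda>_. lborel)"

end

theory Submission
  imports Defs
begin


interpretation PL: product_sigma_finite "\<lambda>_::nat. (lborel::real measure)"
  by unfold_locales

definition gf :: "real \<Rightarrow> real \<Rightarrow> real \<Rightarrow> real \<Rightarrow> real" where
  "gf s \<tau> c t = sqrt (s / (2 * pi * \<tau>\<^sup>2)) * exp (- s * (t - c)\<^sup>2 / (2 * \<tau>\<^sup>2))"

lemma gauss_prod_gf: "gauss_prod s \<tau> K c \<theta> = (\<Prod>i<K. gf s \<tau> (c i) (\<theta> i))"
  by (simp add: gauss_prod_def gf_def)

lemma gf_normal:
  assumes "0 < s" "0 < \<tau>"
  shows "gf s \<tau> c t = normal_density c (\<tau> / sqrt s) t"
proof -
  have "(\<tau> / sqrt s)\<^sup>2 = \<tau>\<^sup>2 / s" using assms by (simp add: power_divide)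
  then show ?thesis using assms
    by (simp add: gf_def normal_density_def real_sqrt_divide field_simps)
qed

lemma gp_integral:
  assumes s: "0 < s" "0 < \<tau>"
    and int: "\<And>i. i < K \<Longrightarrow> integrable lborel (\<lambda>t. g i t * gf s \<tau> (c i) t)"
  shows "integrable (param_measure K) (\<lambda>\<theta>. (\<Prod>i<K. g i (\<theta> i)) * gauss_prod s \<tau> K c \<theta>)"
    "(\<integral>\<theta>. (\<Prod>i<K. g i (\<theta> i)) * gauss_prod s \<tau> K c \<theta> \<partial>param_measure K)
       = (\<Prod>i<K. \<integral>t. g i t * gf s \<tau> (c i) t \<partial>lborel)"
proof -
  have eq: "(\<lambda>\<theta>. (\<Prod>i<K. g i (\<theta> i)) * gauss_prod s \<tau> K c \<theta>)
     = (\<lambda>\<theta>. (\<Prod>i<K. (\<lambda>i t. g i t * gf s \<tau> (c i) t) i (\<theta> i)))"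
    by (simp add: gauss_prod_gf prod.distrib)
  show "integrable (param_measure K) (\<lambda>\<theta>. (\<Prod>i<K. g i (\<theta> i)) * gauss_prod s \<tau> K c \<theta>)"
    unfolding eq param_measure_def
    by (rule PL.product_integrable_prod) (auto intro: int)
  show "(\<integral>\<theta>. (\<Prod>i<K. g i (\<theta> i)) * gauss_prod s \<tau> K c \<theta> \<partial>param_measure K)
       = (\<Prod>i<K. \<integral>t. g i t * gf s \<tau> (c i) t \<partial>lborel)"
    unfolding eq param_measure_def
    by (rule PL.product_integral_prod) (auto intro: int)
qed

definition mom :: "real \<Rightarrow> nat \<Rightarrow> real" where
  "mom \<sigma> n = (if n = 0 then 1 else if n = 2 then \<sigma>\<^sup>2 else if n = 4 then 3 * \<sigma>^4 else if odd n then 0 else 0)"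

lemma gf_moment:
  assumes s: "0 < s" "0 < \<tau>" and n: "n \<in> {0,1,2,4}"
  shows "integrable lborel (\<lambda>t. (t - c)^n * gf s \<tau> c t)"
    "(\<integral>t. (t - c)^n * gf s \<tau> c t \<partial>lborel) = mom (\<tau> / sqrt s) n"
proof -
  define \<sigma> where "\<sigma> = \<tau> / sqrt s"
  have \<sigma>: "0 < \<sigma>" using s unfolding \<sigma>_def by (simp add: divide_pos_pos)
  have eq: "(\<lambda>t. (t - c)^n * gf s \<tau> c t) = (\<lambda>t. normal_density c \<sigma> t * (t - c)^n)"
    using s by (simp add: gf_normal \<sigma>_def mult.commute)
  show "integrable lborel (\<lambda>t. (t - c)^n * gf s \<tau> c t)"
    unfolding eq using \<sigma> by (rule integrable_normal_moment)
  have m1: "(\<integral>t. normal_density c \<sigma> t * (t - c)^(2*1) \<partial>lborel) = \<sigma>\<^sup>2"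
    using integral_normal_moment_even[where k=1 and \<mu>=c and \<sigma>=\<sigma>] \<sigma> by (simp add: power2_eq_square)
  have m2: "(\<integral>t. normal_density c \<sigma> t * (t - c)^(2*2) \<partial>lborel) = 3 * \<sigma>^4"
    using integral_normal_moment_even[where k=2 and \<mu>=c and \<sigma>=\<sigma>] \<sigma>
    by (simp add: fact_numeral power2_eq_square field_simps power4_eq_xxxx)
  have m0: "(\<integral>t. normal_density c \<sigma> t * (t - c)^(2*0+1) \<partial>lborel) = 0"
    using integral_normal_moment_odd[where k=0 and \<mu>=c and \<sigma>=\<sigma>] \<sigma> by simp
  show "(\<integral>t. (t - c)^n * gf s \<tau> c t \<partial>lborel) = mom (\<tau> / sqrt s) n"
    unfolding eq \<sigma>_def[symmetric] using n m0 m1 m2 \<sigma> by (auto simp: mom_def)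
qed

lemma gp_mono:
  assumes s: "0 < s" "0 < \<tau>" and e: "\<And>i. i < K \<Longrightarrow> e i \<in> {0,1,2,4}"
  shows "integrable (param_measure K) (\<lambda>\<theta>. (\<Prod>i<K. (\<theta> i - c i)^(e i)) * gauss_prod s \<tau> K c \<theta>)"
    "(\<integral>\<theta>. (\<Prod>i<K. (\<theta> i - c i)^(e i)) * gauss_prod s \<tau> K c \<theta> \<partial>param_measure K)
       = (\<Prod>i<K. mom (\<tau> / sqrt s) (e i))"
proof -
  have int: "\<And>i. i < K \<Longrightarrow> integrable lborel (\<lambda>t. (\<lambda>i t. (t - c i)^(e i)) i t * gf s \<tau> (c i) t)"
    using gf_moment(1)[OF s e] by simp
  show "integrable (param_measure K) (\<lambda>\<theta>. (\<Prod>i<K. (\<theta> i - c i)^(e i)) * gauss_prod s \<tau> K c \<theta>)"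
    using gp_integral(1)[OF s int] by simp
  show "(\<integral>\<theta>. (\<Prod>i<K. (\<theta> i - c i)^(e i)) * gauss_prod s \<tau> K c \<theta> \<partial>param_measure K)
       = (\<Prod>i<K. mom (\<tau> / sqrt s) (e i))"
    using gp_integral(2)[OF s int] gf_moment(2)[OF s e] by simp
qed

lemma prod_pow_single:
  fixes x :: "nat \<Rightarrow> real"
  assumes "i < K"
  shows "(\<Prod>l<K. x l ^ (if l = i then a else 0)) = x i ^ a"
proof -
  have "(\<Prod>l<K. x l ^ (if l = i then a else 0)) = (\<Prod>l<K. if l = i then x l ^ a else 1)"
    by (intro prod.cong) auto
  also have "\<dots> = x i ^ a" using assms by (simp add: prod.delta)
  finally show ?thesis .
qed

lemma prod_pow_two:
  fixes x :: "nat \<Rightarrow> real"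
  assumes "i < K" "j < K"
  shows "(\<Prod>l<K. x l ^ ((if l = i then a else 0) + (if l = j then b else 0))) = x i ^ a * x j ^ b"
  using prod_pow_single[OF assms(1), of x a] prod_pow_single[OF assms(2), of x b]
  by (simp add: power_add prod.distrib)

lemma E0:
  assumes s: "0 < s" "0 < \<tau>"
  shows "integrable (param_measure K) (gauss_prod s \<tau> K c)"
    "(\<integral>\<theta>. gauss_prod s \<tau> K c \<theta> \<partial>param_measure K) = 1"
  using gp_mono[OF s, of K "\<lambda>_. 0" c] by (simp_all add: mom_def)

lemma E2:
  assumes s: "0 < s" "0 < \<tau>" and ij: "i < K" "j < K"
  shows "integrable (param_measure K) (\<lambda>\<theta>. (\<theta> i - c i) * (\<theta> j - c j) * gauss_prod s \<tau> K c \<theta>)"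
    "(\<integral>\<theta>. (\<theta> i - c i) * (\<theta> j - c j) * gauss_prod s \<tau> K c \<theta> \<partial>param_measure K)
       = (if i = j then \<tau>\<^sup>2 / s else 0)"
proof -
  define e where "e l = (if l = i then 1 else 0) + (if l = j then (1::nat) else 0)" for l
  have e: "\<And>l. l < K \<Longrightarrow> e l \<in> {0,1,2,4}" by (auto simp: e_def)
  have eq: "\<And>\<theta>. (\<Prod>l<K. (\<theta> l - c l)^(e l)) = (\<theta> i - c i) * (\<theta> j - c j)"
    unfolding e_def using prod_pow_two[OF ij, of _ 1 1] by simp
  show "integrable (param_measure K) (\<lambda>\<theta>. (\<theta> i - c i) * (\<theta> j - c j) * gauss_prod s \<tau> K c \<theta>)"
    using gp_mono(1)[OF s, of K e c] e by (simp add: eq)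
  have "(\<integral>\<theta>. (\<theta> i - c i) * (\<theta> j - c j) * gauss_prod s \<tau> K c \<theta> \<partial>param_measure K)
       = (\<Prod>l<K. mom (\<tau> / sqrt s) (e l))"
    using gp_mono(2)[OF s, of K e c] e by (simp add: eq)
  also have "\<dots> = (if i = j then \<tau>\<^sup>2 / s else 0)"
  proof (cases "i = j")
    case True
    have "(\<Prod>l<K. mom (\<tau> / sqrt s) (e l)) = (\<Prod>l<K. if l = i then (\<tau> / sqrt s)\<^sup>2 else 1)"
      by (intro prod.cong) (auto simp: e_def mom_def True)
    also have "\<dots> = \<tau>\<^sup>2 / s" using ij s by (simp add: prod.delta power_divide)
    finally show ?thesis using True by simp
  next
    case False
    have "mom (\<tau> / sqrt s) (e i) = 0" using False by (simp add: e_def mom_def)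
    then show ?thesis using False ij by (auto intro!: prod_zero)
  qed
  finally show "(\<integral>\<theta>. (\<theta> i - c i) * (\<theta> j - c j) * gauss_prod s \<tau> K c \<theta> \<partial>param_measure K)
       = (if i = j then \<tau>\<^sup>2 / s else 0)" .
qed

lemma E4:
  assumes s: "0 < s" "0 < \<tau>" and ij: "i < K" "j < K"
  shows "integrable (param_measure K) (\<lambda>\<theta>. (\<theta> i - c i)\<^sup>2 * (\<theta> j - c j)\<^sup>2 * gauss_prod s \<tau> K c \<theta>)"
    "(\<integral>\<theta>. (\<theta> i - c i)\<^sup>2 * (\<theta> j - c j)\<^sup>2 * gauss_prod s \<tau> K c \<theta> \<partial>param_measure K)
       \<le> 3 * (\<tau>\<^sup>2 / s)\<^sup>2"
proof -
  define e where "e l = (if l = i then 2 else 0) + (if l = j then (2::nat) else 0)" for l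
  have e: "\<And>l. l < K \<Longrightarrow> e l \<in> {0,1,2,4}" by (auto simp: e_def)
  have eq: "\<And>\<theta>. (\<Prod>l<K. (\<theta> l - c l)^(e l)) = (\<theta> i - c i)\<^sup>2 * (\<theta> j - c j)\<^sup>2"
    unfolding e_def using prod_pow_two[OF ij, of _ 2 2] by simp
  show "integrable (param_measure K) (\<lambda>\<theta>. (\<theta> i - c i)\<^sup>2 * (\<theta> j - c j)\<^sup>2 * gauss_prod s \<tau> K c \<theta>)"
    using gp_mono(1)[OF s, of K e c] e by (simp add: eq)
  have sq: "(\<tau> / sqrt s)\<^sup>2 = \<tau>\<^sup>2 / s" using s by (simp add: power_divide)
  have "(\<integral>\<theta>. (\<theta> i - c i)\<^sup>2 * (\<theta> j - c j)\<^sup>2 * gauss_prod s \<tau> K c \<theta> \<partial>param_measure K)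
       = (\<Prod>l<K. mom (\<tau> / sqrt s) (e l))"
    using gp_mono(2)[OF s, of K e c] e by (simp add: eq)
  also have "\<dots> \<le> 3 * (\<tau>\<^sup>2 / s)\<^sup>2"
  proof (cases "i = j")
    case True
    have "(\<Prod>l<K. mom (\<tau> / sqrt s) (e l)) = (\<Prod>l<K. if l = i then 3 * (\<tau> / sqrt s)^4 else 1)"
      by (intro prod.cong) (auto simp: e_def mom_def True)
    also have "\<dots> = 3 * (\<tau>\<^sup>2 / s)\<^sup>2" using ij s sq
      by (simp add: prod.delta flip: sq)
    finally show ?thesis by simp
  next
    case False
    have "(\<Prod>l<K. mom (\<tau> / sqrt s) (e l)) = (\<Prod>l<K. (if l = i then (\<tau> / sqrt s)\<^sup>2 else 1) * (if l = j then (\<tau> / sqrt s)\<^sup>2 else 1))"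
      by (intro prod.cong) (auto simp: e_def mom_def False)
    also have "\<dots> = (\<tau>\<^sup>2 / s)\<^sup>2" using ij s False
      by (simp add: prod.distrib prod.delta sq power2_eq_square)
    finally show ?thesis by simp
  qed
  finally show "(\<integral>\<theta>. (\<theta> i - c i)\<^sup>2 * (\<theta> j - c j)\<^sup>2 * gauss_prod s \<tau> K c \<theta> \<partial>param_measure K)
       \<le> 3 * (\<tau>\<^sup>2 / s)\<^sup>2" .
qed



lemma quad_theta:
  assumes s: "0 < s" "0 < \<tau>" and S: "finite S" "inj_on \<iota> S" "\<And>m. m \<in> S \<Longrightarrow> \<iota> m < K"
  shows "integrable (param_measure K) (\<lambda>\<theta>. (\<Sum>m\<in>S. \<Sum>m'\<in>S. (\<theta> (\<iota> m) - c (\<iota> m)) * (\<theta> (\<iota> m') - c (\<iota> m')) * M m m') * gauss_prod s \<tau> K c \<theta>)"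
    "(\<integral>\<theta>. (\<Sum>m\<in>S. \<Sum>m'\<in>S. (\<theta> (\<iota> m) - c (\<iota> m)) * (\<theta> (\<iota> m') - c (\<iota> m')) * M m m') * gauss_prod s \<tau> K c \<theta> \<partial>param_measure K)
      = \<tau>\<^sup>2 / s * (\<Sum>m\<in>S. M m m)"
proof -
  have eq: "(\<lambda>\<theta>. (\<Sum>m\<in>S. \<Sum>m'\<in>S. (\<theta> (\<iota> m) - c (\<iota> m)) * (\<theta> (\<iota> m') - c (\<iota> m')) * M m m') * gauss_prod s \<tau> K c \<theta>)
    = (\<lambda>\<theta>. \<Sum>m\<in>S. \<Sum>m'\<in>S. M m m' * ((\<theta> (\<iota> m) - c (\<iota> m)) * (\<theta> (\<iota> m') - c (\<iota> m')) * gauss_prod s \<tau> K c \<theta>))"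
    by (simp add: sum_distrib_left sum_distrib_right mult_ac)
  have I: "\<And>m m'. m \<in> S \<Longrightarrow> m' \<in> S \<Longrightarrow> integrable (param_measure K) (\<lambda>\<theta>. M m m' * ((\<theta> (\<iota> m) - c (\<iota> m)) * (\<theta> (\<iota> m') - c (\<iota> m')) * gauss_prod s \<tau> K c \<theta>))"
    using E2(1)[OF s S(3) S(3)] by auto
  show "integrable (param_measure K) (\<lambda>\<theta>. (\<Sum>m\<in>S. \<Sum>m'\<in>S. (\<theta> (\<iota> m) - c (\<iota> m)) * (\<theta> (\<iota> m') - c (\<iota> m')) * M m m') * gauss_prod s \<tau> K c \<theta>)"
    unfolding eq by (auto intro!: integrable_sum I)
  have "(\<integral>\<theta>. (\<Sum>m\<in>S. \<Sum>m'\<in>S. (\<theta> (\<iota> m) - c (\<iota> m)) * (\<theta> (\<iota> m') - c (\<iota> m')) * M m m') * gauss_prod s \<tau> K c \<theta> \<partial>param_measure K)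
     = (\<Sum>m\<in>S. \<Sum>m'\<in>S. M m m' * (if \<iota> m = \<iota> m' then \<tau>\<^sup>2 / s else 0))"
    unfolding eq using I E2(2)[OF s S(3) S(3)]
    by (simp add: integral_sum integrable_sum)
  also have "\<dots> = (\<Sum>m\<in>S. \<Sum>m'\<in>S. if m = m' then M m m' * (\<tau>\<^sup>2 / s) else 0)"
    using S(2) by (intro sum.cong refl) (auto dest: inj_onD)
  also have "\<dots> = (\<Sum>m\<in>S. M m m * (\<tau>\<^sup>2 / s))"
    using S(1) by (intro sum.cong refl) simp
  also have "\<dots> = \<tau>\<^sup>2 / s * (\<Sum>m\<in>S. M m m)"
    by (metis (no_types) mult.commute sum_distrib_right)
  finally show "(\<integral>\<theta>. (\<Sum>m\<in>S. \<Sum>m'\<in>S. (\<theta> (\<iota> m) - c (\<iota> m)) * (\<theta> (\<iota> m') - c (\<iota> m')) * M m m') * gauss_prod s \<tau> K c \<theta> \<partial>param_measure K)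
      = \<tau>\<^sup>2 / s * (\<Sum>m\<in>S. M m m)" .
qed

lemma quad_x:
  fixes N :: "'x measure" and a :: "'m \<Rightarrow> 'x \<Rightarrow> real" and A :: "'m \<Rightarrow> real"
  assumes N: "prob_space N" and S: "finite S"
    and meas: "\<And>m. m \<in> S \<Longrightarrow> a m \<in> borel_measurable N"
    and bnd: "\<And>m x. m \<in> S \<Longrightarrow> x \<in> space N \<Longrightarrow> \<bar>a m x\<bar> \<le> A m"
  shows "integrable N (\<lambda>x. (\<Sum>m\<in>S. a m x * w m)\<^sup>2)"
    "(\<integral>x. (\<Sum>m\<in>S. a m x * w m)\<^sup>2 \<partial>N) = (\<Sum>m\<in>S. \<Sum>m'\<in>S. w m * w m' * (\<integral>x. a m x * a m' x \<partial>N))"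
    "\<And>m. m \<in> S \<Longrightarrow> (\<integral>x. a m x * a m x \<partial>N) \<le> (A m)\<^sup>2"
proof -
  interpret prob_space N by fact
  have I: "integrable N (\<lambda>x. a m x * a m' x)" if "m \<in> S" "m' \<in> S" for m m'
  proof (rule integrable_const_bound[where B="A m * A m'"])
    show "AE x in N. norm (a m x * a m' x) \<le> A m * A m'"
    proof (rule AE_I2)
      fix x assume x: "x \<in> space N"
      have h1: "\<bar>a m x\<bar> \<le> A m" and h2: "\<bar>a m' x\<bar> \<le> A m'" using bnd that x by auto
      show "norm (a m x * a m' x) \<le> A m * A m'"
        using mult_mono[OF h1 h2] h1 by (simp add: abs_mult)
    qed
    show "(\<lambda>x. a m x * a m' x) \<in> borel_measurable N" using meas that by auto
  qed
  have eq: "(\<lambda>x. (\<Sum>m\<in>S. a m x * w m)\<^sup>2) = (\<lambda>x. \<Sum>m\<in>S. \<Sum>m'\<in>S. w m * w m' * (a m x * a m' x))"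
    by (simp add: power2_eq_square sum_product mult_ac)
  show "integrable N (\<lambda>x. (\<Sum>m\<in>S. a m x * w m)\<^sup>2)"
    unfolding eq by (auto intro!: integrable_sum integrable_mult_right I)
  show "(\<integral>x. (\<Sum>m\<in>S. a m x * w m)\<^sup>2 \<partial>N) = (\<Sum>m\<in>S. \<Sum>m'\<in>S. w m * w m' * (\<integral>x. a m x * a m' x \<partial>N))"
    unfolding eq using I by (simp add: integral_sum integrable_sum)
  fix m assume m: "m \<in> S"
  have "(\<integral>x. a m x * a m x \<partial>N) \<le> (\<integral>x. (A m)\<^sup>2 \<partial>N)"
  proof (rule integral_mono)
    show "integrable N (\<lambda>x. a m x * a m x)" using I m by auto
    fix x assume x: "x \<in> space N"
    have h: "\<bar>a m x\<bar> \<le> A m" using bnd m x by auto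
    have "\<bar>a m x\<bar> * \<bar>a m x\<bar> \<le> A m * A m" using mult_mono[OF h h] h by auto
    then show "a m x * a m x \<le> (A m)\<^sup>2" by (simp add: power2_eq_square)
  qed auto
  then show "(\<integral>x. a m x * a m x \<partial>N) \<le> (A m)\<^sup>2" by (simp add: prob_space)
qed



definition dpsi :: "real \<Rightarrow> real" where "dpsi u = psi u * (1 - psi u)"

lemma psi_pos: "0 < psi u" and psi_lt1: "psi u < 1"
  by (auto simp: psi_def add_pos_pos)

lemma psi_abs_le1: "\<bar>psi u\<bar> \<le> 1"
  using psi_pos[of u] psi_lt1[of u] by auto

lemma psi_deriv: "(psi has_real_derivative dpsi u) (at u)"
proof -
  have "((\<lambda>u. 1 / (1 + exp (- u))) has_real_derivative
      (- (- exp (- u)) / (1 + exp (- u))\<^sup>2)) (at u)"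
    by (auto intro!: derivative_eq_intros simp: power2_eq_square add_pos_pos)
      (metis exp_gt_zero add_pos_pos zero_less_one less_irrefl)
  moreover have "(- (- exp (- u)) / (1 + exp (- u))\<^sup>2) = dpsi u"
  proof -
    have p: "1 + exp (- u) > 0" by (simp add: add_pos_pos)
    show ?thesis unfolding dpsi_def psi_def using p
      by (simp add: divide_simps power2_eq_square)
  qed
  ultimately show ?thesis unfolding psi_def[abs_def] by simp
qed

lemma dpsi_bounds: "0 \<le> dpsi u" "dpsi u \<le> 1/4"
proof -
  have "0 < psi u" "psi u < 1" by (rule psi_pos, rule psi_lt1)
  then show "0 \<le> dpsi u" by (simp add: dpsi_def)
  have "(psi u - 1/2)\<^sup>2 \<ge> 0" by simp
  then show "dpsi u \<le> 1/4" by (simp add: dpsi_def power2_eq_square algebra_simps)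
qed

lemma abs_dpsi: "\<bar>dpsi u\<bar> \<le> 1/4"
  using dpsi_bounds[of u] by simp

lemma psi_lip: "\<bar>psi b - psi a\<bar> \<le> \<bar>b - a\<bar> / 4"
proof (cases a b rule: linorder_cases)
  case less
  then obtain z where "psi b - psi a = (b - a) * dpsi z"
    using MVT2[of a b psi dpsi] psi_deriv by blast
  then show ?thesis using abs_dpsi[of z] less
    by (simp add: abs_mult)
next
  case greater
  then obtain z where "psi a - psi b = (a - b) * dpsi z"
    using MVT2[of b a psi dpsi] psi_deriv by blast
  then show ?thesis using abs_dpsi[of z] greater
    by (simp add: abs_mult abs_minus_commute)
qed simp

lemma dpsi_lip: "\<bar>dpsi b - dpsi a\<bar> \<le> \<bar>b - a\<bar> / 4"
proof -
  have "dpsi b - dpsi a = (psi b - psi a) * (1 - psi a - psi b)"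
    by (simp add: dpsi_def algebra_simps)
  moreover have "\<bar>1 - psi a - psi b\<bar> \<le> 1"
    using psi_pos[of a] psi_lt1[of a] psi_pos[of b] psi_lt1[of b] by auto
  ultimately have "\<bar>dpsi b - dpsi a\<bar> \<le> \<bar>psi b - psi a\<bar> * 1"
    by (simp only: abs_mult) (rule mult_left_mono, auto)
  then show ?thesis using psi_lip[of b a] by simp
qed

lemma psi_rem: "\<bar>psi b - psi a - dpsi a * (b - a)\<bar> \<le> (b - a)\<^sup>2 / 4"
proof (cases a b rule: linorder_cases)
  case less
  then obtain z where z: "a < z" "z < b" "psi b - psi a = (b - a) * dpsi z"
    using MVT2[of a b psi dpsi] psi_deriv by blast
  have "psi b - psi a - dpsi a * (b - a) = (b - a) * (dpsi z - dpsi a)" using z by (simp add: algebra_simps)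
  moreover have "\<bar>dpsi z - dpsi a\<bar> \<le> \<bar>b - a\<bar> / 4" using dpsi_lip[of z a] z by auto
  ultimately have "\<bar>psi b - psi a - dpsi a * (b - a)\<bar> \<le> \<bar>b - a\<bar> * (\<bar>b - a\<bar> / 4)"
    by (simp only: abs_mult) (rule mult_left_mono, auto)
  then show ?thesis by (simp add: power2_eq_square abs_mult_self_eq)
next
  case greater
  then obtain z where z: "b < z" "z < a" "psi a - psi b = (a - b) * dpsi z"
    using MVT2[of b a psi dpsi] psi_deriv by blast
  have "psi b - psi a - dpsi a * (b - a) = (b - a) * (dpsi z - dpsi a)" using z by (simp add: algebra_simps)
  moreover have "\<bar>dpsi z - dpsi a\<bar> \<le> \<bar>b - a\<bar> / 4" using dpsi_lip[of z a] z by auto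
  ultimately have "\<bar>psi b - psi a - dpsi a * (b - a)\<bar> \<le> \<bar>b - a\<bar> * (\<bar>b - a\<bar> / 4)"
    by (simp only: abs_mult) (rule mult_left_mono, auto)
  then show ?thesis by (simp add: power2_eq_square abs_mult_self_eq)
qed simp



definition Nc :: "nat \<Rightarrow> (nat \<Rightarrow> real) measure" where
  "Nc p = restrict_space (cube_measure p) (unit_cube p)"

lemma cube_sets: "unit_cube p \<in> sets (cube_measure p)"
  unfolding unit_cube_def cube_measure_def by (rule sets_PiM_I_finite) auto

lemma cube_sets': "unit_cube p \<inter> space (cube_measure p) \<in> sets (cube_measure p)"
  using cube_sets by (metis sets.Int_space_eq2)

lemma space_Nc: "space (Nc p) = unit_cube p"
  unfolding Nc_def space_restrict_space cube_measure_def space_PiM unit_cube_def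
  by (auto simp: PiE_def Pi_def)

lemma prob_Nc: "prob_space (Nc p)"
proof
  interpret PL: product_sigma_finite "\<lambda>_::nat. (lborel::real measure)" by unfold_locales
  have "emeasure (Nc p) (space (Nc p)) = emeasure (cube_measure p) (unit_cube p)"
    unfolding space_Nc unfolding Nc_def by (rule emeasure_restrict_space[OF cube_sets']) simp
  also have "\<dots> = (\<Prod>i<p. emeasure lborel {0..(1::real)})"
    unfolding cube_measure_def unit_cube_def by (rule PL.emeasure_PiM) auto
  also have "\<dots> = 1" by simp
  finally show "emeasure (Nc p) (space (Nc p)) = 1" .
qed

lemma sqL2_Nc: "sq_L2_dist p g f0 = (\<integral>x. (g x - f0 x)\<^sup>2 \<partial>Nc p)"
  unfolding sq_L2_dist_def set_lebesgue_integral_def Nc_def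
  by (rule integral_restrict_space[OF cube_sets', symmetric])

lemma f0_Nc:
  assumes "square_integrable_cube p f0"
  shows "f0 \<in> borel_measurable (Nc p)" "integrable (Nc p) (\<lambda>x. (f0 x)\<^sup>2)"
  using assms unfolding square_integrable_cube_def set_borel_measurable_def set_integrable_def Nc_def
  by (simp_all add: borel_measurable_restrict_space_iff[OF cube_sets'] integrable_restrict_space[OF cube_sets'])

lemma coord_meas_Pi: fixes n i :: nat shows "(\<lambda>x. x i) \<in> borel_measurable (PiM {..<n} (\<lambda>_. (lborel::real measure)))"
proof (cases "i < n")
  case True then show ?thesis
    using measurable_component_singleton[of i "{..<n}" "\<lambda>_. (lborel::real measure)"] by simp
next
  case False
  have "(\<lambda>x::nat\<Rightarrow>real. undefined::real) \<in> borel_measurable (PiM {..<n} (\<lambda>_. (lborel::real measure)))"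
    by simp
  moreover have "\<And>x. x \<in> space (PiM {..<n} (\<lambda>_. (lborel::real measure))) \<Longrightarrow> undefined = x i"
    using False by (auto simp: space_PiM PiE_def extensional_def)
  ultimately show ?thesis by (rule measurable_cong[THEN iffD1, rotated])
qed

lemma coord_meas_Nc[measurable]: "(\<lambda>x. x i) \<in> borel_measurable (Nc p)"
  unfolding Nc_def
  by (rule measurable_restrict_space1) (use coord_meas_Pi[of i p] in \<open>simp add: cube_measure_def\<close>)

lemma coord_meas_param[measurable]: "(\<lambda>x. x i) \<in> borel_measurable (param_measure K)"
  using coord_meas_Pi[of i K] by (simp add: param_measure_def)

lemma Nc_coord: "x \<in> space (Nc p) \<Longrightarrow> i < p \<Longrightarrow> 0 \<le> x i \<and> x i \<le> 1"
  by (auto simp: space_Nc unit_cube_def PiE_def Pi_def)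



definition gi :: "nat \<Rightarrow> nat \<Rightarrow> nat \<Rightarrow> nat \<Rightarrow> nat" where
  "gi k p j h = k + (j - 1) * (p + 1) + 1 + h"

definition xt :: "(nat \<Rightarrow> real) \<Rightarrow> nat \<Rightarrow> real" where
  "xt x h = (if h = 0 then 1 else x (h - 1))"

definition uu :: "nat \<Rightarrow> nat \<Rightarrow> (nat \<Rightarrow> real) \<Rightarrow> nat \<Rightarrow> (nat \<Rightarrow> real) \<Rightarrow> real" where
  "uu p k \<theta> j x = (\<Sum>h=0..p. \<theta> (gi k p j h) * xt x h)"

lemma nn_f_uu: "nn_f p k \<theta> x = \<theta> 0 + (\<Sum>j=1..k. \<theta> j * psi (uu p k \<theta> j x))"
proof -
  have "uu p k \<theta> j x = \<theta> (k + (j - 1) * (p + 1) + 1)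
           + (\<Sum>h=1..p. \<theta> (k + (j - 1) * (p + 1) + 1 + h) * x (h - 1))" for j
  proof -
    have "{0..p} = insert 0 {1..p}" by auto
    then have "uu p k \<theta> j x = \<theta> (gi k p j 0) * xt x 0 + (\<Sum>h=1..p. \<theta> (gi k p j h) * xt x h)"
      unfolding uu_def by (simp add: sum.insert)
    also have "(\<Sum>h=1..p. \<theta> (gi k p j h) * xt x h) = (\<Sum>h=1..p. \<theta> (k + (j - 1) * (p + 1) + 1 + h) * x (h - 1))"
      by (intro sum.cong) (auto simp: gi_def xt_def)
    finally show ?thesis by (simp add: gi_def xt_def)
  qed
  then show ?thesis unfolding nn_f_def by simp
qed

lemma gi_bound:
  assumes "j \<in> {1..k}" "h \<le> p"
  shows "gi k p j h < nn_K p k"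
proof -
  obtain j' where j': "j = Suc j'" using assms by (cases j) auto
  have "j' * (p + 1) + (p + 1) \<le> k * (p + 1)"
    using assms j' mult_le_mono1[of "Suc j'" k "p+1"] by simp
  then show ?thesis using assms j' unfolding gi_def nn_K_def by (simp add: algebra_simps)
qed

lemma dm_nat: fixes a q h :: nat assumes "h < q" shows "(a * q + h) div q = a" "(a * q + h) mod q = h"
  using assms by (simp_all add: add.commute[of "a * q"])

lemma gi_inj: "inj_on (\<lambda>m. gi k p (fst m) (snd m)) ({1..k} \<times> {0..p})"
proof (rule inj_onI)
  fix m m' assume m: "m \<in> {1..k} \<times> {0..p}" "m' \<in> {1..k} \<times> {0..p}"
    and eq: "gi k p (fst m) (snd m) = gi k p (fst m') (snd m')"
  obtain j h j' h' where mm: "m = (j, h)" "m' = (j', h')" by (cases m, cases m')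
  have e: "(j - 1) * (p + 1) + h = (j' - 1) * (p + 1) + h'" using eq mm by (simp add: gi_def)
  have hp: "h < p + 1" "h' < p + 1" using m mm by auto
  note d1 = dm_nat[OF hp(1), of "j - 1"]
  note d2 = dm_nat[OF hp(2), of "j' - 1"]
  from d1 d2
  have "j - 1 = j' - 1" "h = h'" using e d1 d2 by metis+
  then show "m = m'" using m mm by auto
qed

lemma xt_bound: "x \<in> space (Nc p) \<Longrightarrow> h \<le> p \<Longrightarrow> \<bar>xt x h\<bar> \<le> 1"
  using Nc_coord[of x p "h - 1"] by (auto simp: xt_def)



definition a1 :: "nat \<Rightarrow> nat \<Rightarrow> (nat \<Rightarrow> real) \<Rightarrow> nat \<Rightarrow> (nat \<Rightarrow> real) \<Rightarrow> real" where
  "a1 p k c j x = (if j = 0 then 1 else psi (uu p k c j x))"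
definition a3 :: "nat \<Rightarrow> nat \<Rightarrow> (nat \<Rightarrow> real) \<Rightarrow> nat \<times> nat \<Rightarrow> (nat \<Rightarrow> real) \<Rightarrow> real" where
  "a3 p k c m x = c (fst m) * dpsi (uu p k c (fst m) x) * xt x (snd m)"
definition ig :: "nat \<Rightarrow> nat \<Rightarrow> nat \<times> nat \<Rightarrow> nat" where
  "ig k p m = gi k p (fst m) (snd m)"
definition S3 :: "nat \<Rightarrow> nat \<Rightarrow> (nat \<times> nat) set" where
  "S3 k p = {1..k} \<times> {0..p}"
definition DD :: "nat \<Rightarrow> nat \<Rightarrow> (nat \<Rightarrow> real) \<Rightarrow> (nat \<Rightarrow> real) \<Rightarrow> nat \<Rightarrow> (nat \<Rightarrow> real) \<Rightarrow> real" where
  "DD p k \<theta> c j x = (\<Sum>h=0..p. (\<theta> (gi k p j h) - c (gi k p j h)) * xt x h)"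
definition LL1 where
  "LL1 p k c \<theta> x = (\<Sum>j\<in>{0..k}. a1 p k c j x * (\<theta> j - c j))"
definition LL3 where
  "LL3 p k c \<theta> x = (\<Sum>m\<in>S3 k p. a3 p k c m x * (\<theta> (ig k p m) - c (ig k p m)))"
definition TT2 where
  "TT2 p k c \<theta> x = (\<Sum>j=1..k. (\<theta> j - c j) * (psi (uu p k \<theta> j x) - psi (uu p k c j x)))"
definition TT4 where
  "TT4 p k c \<theta> x = (\<Sum>j=1..k. c j * (psi (uu p k \<theta> j x) - psi (uu p k c j x)
      - dpsi (uu p k c j x) * (uu p k \<theta> j x - uu p k c j x)))"

lemma uu_diff: "uu p k \<theta> j x - uu p k c j x = DD p k \<theta> c j x"
  unfolding uu_def DD_def by (simp add: sum_subtractf[symmetric] algebra_simps)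

lemma LL1_eq: "LL1 p k c \<theta> x = (\<theta> 0 - c 0) + (\<Sum>j=1..k. psi (uu p k c j x) * (\<theta> j - c j))"
proof -
  have "{0..k} = insert 0 {1..k}" by auto
  then have "LL1 p k c \<theta> x = a1 p k c 0 x * (\<theta> 0 - c 0) + (\<Sum>j=1..k. a1 p k c j x * (\<theta> j - c j))"
    unfolding LL1_def by (simp add: sum.insert)
  also have "(\<Sum>j=1..k. a1 p k c j x * (\<theta> j - c j)) = (\<Sum>j=1..k. psi (uu p k c j x) * (\<theta> j - c j))"
    by (intro sum.cong) (auto simp: a1_def)
  finally show ?thesis by (simp add: a1_def)
qed

lemma LL3_eq: "LL3 p k c \<theta> x = (\<Sum>j=1..k. c j * dpsi (uu p k c j x) * DD p k \<theta> c j x)"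
proof -
  have "LL3 p k c \<theta> x = (\<Sum>(j,h)\<in>{1..k} \<times> {0..p}. c j * dpsi (uu p k c j x) * xt x h * (\<theta> (gi k p j h) - c (gi k p j h)))"
    unfolding LL3_def S3_def by (intro sum.cong) (auto simp: a3_def ig_def)
  also have "\<dots> = (\<Sum>j=1..k. \<Sum>h=0..p. c j * dpsi (uu p k c j x) * xt x h * (\<theta> (gi k p j h) - c (gi k p j h)))"
    by (rule sum.cartesian_product[symmetric])
  also have "\<dots> = (\<Sum>j=1..k. c j * dpsi (uu p k c j x) * DD p k \<theta> c j x)"
    unfolding DD_def by (simp add: sum_distrib_left mult_ac)
  finally show ?thesis .
qed

lemma decomp:
  "nn_f p k \<theta> x - nn_f p k c x = LL1 p k c \<theta> x + LL3 p k c \<theta> x + TT2 p k c \<theta> x + TT4 p k c \<theta> x"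
proof -
  have "nn_f p k \<theta> x - nn_f p k c x = (\<theta> 0 - c 0) + (\<Sum>j=1..k. \<theta> j * psi (uu p k \<theta> j x) - c j * psi (uu p k c j x))"
    unfolding nn_f_uu by (simp add: sum_subtractf)
  also have "(\<Sum>j=1..k. \<theta> j * psi (uu p k \<theta> j x) - c j * psi (uu p k c j x))
     = (\<Sum>j=1..k. psi (uu p k c j x) * (\<theta> j - c j)) + (\<Sum>j=1..k. c j * dpsi (uu p k c j x) * DD p k \<theta> c j x)
       + TT2 p k c \<theta> x + TT4 p k c \<theta> x"
    unfolding TT2_def TT4_def uu_diff by (simp add: sum.distrib[symmetric] algebra_simps)
  finally show ?thesis unfolding LL1_eq LL3_eq by simp
qed

lemma sq4: "((a::real) + b + c + d)\<^sup>2 \<le> 4 * (a\<^sup>2 + b\<^sup>2 + c\<^sup>2 + d\<^sup>2)"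
proof -
  have "0 \<le> (a-b)\<^sup>2 + (a-c)\<^sup>2 + (a-d)\<^sup>2 + (b-c)\<^sup>2 + (b-d)\<^sup>2 + (c-d)\<^sup>2" by simp
  then show ?thesis by (simp add: power2_eq_square algebra_simps)
qed

lemma DD_bound:
  assumes x: "x \<in> space (Nc p)"
  shows "(DD p k \<theta> c j x)\<^sup>2 \<le> (p + 1) * (\<Sum>h=0..p. (\<theta> (gi k p j h) - c (gi k p j h))\<^sup>2)"
proof -
  have "(DD p k \<theta> c j x)\<^sup>2 \<le> (\<Sum>h=0..p. (\<theta> (gi k p j h) - c (gi k p j h))\<^sup>2) * (\<Sum>h=0..p. (xt x h)\<^sup>2)"
    unfolding DD_def by (rule Cauchy_Schwarz_ineq_sum)
  also have "(\<Sum>h=0..p. (xt x h)\<^sup>2) \<le> (\<Sum>h=0..p. 1)"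
  proof (rule sum_mono)
    fix h assume "h \<in> {0..p}"
    then have "\<bar>xt x h\<bar> \<le> 1" using xt_bound[OF x] by auto
    then show "(xt x h)\<^sup>2 \<le> 1" by (simp add: abs_square_le_1)
  qed
  then have "(\<Sum>h=0..p. (\<theta> (gi k p j h) - c (gi k p j h))\<^sup>2) * (\<Sum>h=0..p. (xt x h)\<^sup>2)
      \<le> (\<Sum>h=0..p. (\<theta> (gi k p j h) - c (gi k p j h))\<^sup>2) * (p + 1)"
    by (intro mult_left_mono) (auto intro: sum_nonneg)
  finally show ?thesis by (simp add: mult.commute add.commute)
qed



definition Dsq :: "nat \<Rightarrow> nat \<Rightarrow> (nat \<Rightarrow> real) \<Rightarrow> (nat \<Rightarrow> real) \<Rightarrow> nat \<Rightarrow> real" where "Dsq p k \<theta> c j = (\<Sum>h=0..p. (\<theta> (gi k p j h) - c (gi k p j h))\<^sup>2)"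
definition Bc :: "nat \<Rightarrow> nat \<Rightarrow> (nat \<Rightarrow> real) \<Rightarrow> real" where "Bc p k c = (\<Sum>i<nn_K p k. (c i)\<^sup>2)"
definition P2 :: "nat \<Rightarrow> nat \<Rightarrow> (nat \<Rightarrow> real) \<Rightarrow> (nat \<Rightarrow> real) \<Rightarrow> real" where "P2 p k c \<theta> = real k * (real p + 1) / 16 *
   (\<Sum>j=1..k. \<Sum>h=0..p. (\<theta> j - c j)\<^sup>2 * (\<theta> (gi k p j h) - c (gi k p j h))\<^sup>2)"
definition P4 :: "nat \<Rightarrow> nat \<Rightarrow> (nat \<Rightarrow> real) \<Rightarrow> (nat \<Rightarrow> real) \<Rightarrow> real" where "P4 p k c \<theta> = Bc p k c * (real p + 1)\<^sup>2 / 16 *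
   (\<Sum>j=1..k. \<Sum>h=0..p. \<Sum>h'=0..p. (\<theta> (gi k p j h) - c (gi k p j h))\<^sup>2 * (\<theta> (gi k p j h') - c (gi k p j h'))\<^sup>2)"

lemma psi_diff_sq: "(psi a - psi b)\<^sup>2 \<le> (a - b)\<^sup>2 / 16"
proof -
  have "\<bar>psi a - psi b\<bar> \<le> \<bar>a - b\<bar> / 4" by (rule psi_lip)
  then have "\<bar>psi a - psi b\<bar>\<^sup>2 \<le> (\<bar>a - b\<bar> / 4)\<^sup>2" by (rule power_mono) simp
  then show ?thesis by (simp add: power_divide)
qed

lemma psi_rem_sq: "(psi b - psi a - dpsi a * (b - a))\<^sup>2 \<le> ((b - a)\<^sup>2)\<^sup>2 / 16"
proof -
  have "\<bar>psi b - psi a - dpsi a * (b - a)\<bar> \<le> (b - a)\<^sup>2 / 4" by (rule psi_rem)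
  then have "\<bar>psi b - psi a - dpsi a * (b - a)\<bar>\<^sup>2 \<le> ((b - a)\<^sup>2 / 4)\<^sup>2" by (rule power_mono) simp
  then show ?thesis by (simp add: power_divide)
qed

lemma Bc_ge: "(\<Sum>j=1..k. (c j)\<^sup>2) \<le> Bc p k c"
  unfolding Bc_def
  by (rule sum_mono2) (auto simp: nn_K_def)

lemma Bc_nonneg: "0 \<le> Bc p k c"
  unfolding Bc_def by (simp add: sum_nonneg)

lemma TT2_bound:
  assumes x: "x \<in> space (Nc p)"
  shows "(TT2 p k c \<theta> x)\<^sup>2 \<le> P2 p k c \<theta>"
proof -
  have "(TT2 p k c \<theta> x)\<^sup>2 \<le> (\<Sum>j=1..k. ((\<theta> j - c j) * (psi (uu p k \<theta> j x) - psi (uu p k c j x)))\<^sup>2) * card {1..k}"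
    unfolding TT2_def by (rule sum_squared_le_sum_of_squares)
  also have "\<dots> \<le> (\<Sum>j=1..k. (\<theta> j - c j)\<^sup>2 * ((real p + 1) * Dsq p k \<theta> c j / 16)) * card {1..k}"
  proof (intro mult_right_mono sum_mono)
    fix j
    have "(psi (uu p k \<theta> j x) - psi (uu p k c j x))\<^sup>2 \<le> (DD p k \<theta> c j x)\<^sup>2 / 16"
      using psi_diff_sq[of "uu p k \<theta> j x" "uu p k c j x"] by (simp add: uu_diff)
    also have "\<dots> \<le> (real p + 1) * Dsq p k \<theta> c j / 16"
      using DD_bound[OF x, of k \<theta> c j] by (simp add: Dsq_def add.commute)
    finally have hh: "(psi (uu p k \<theta> j x) - psi (uu p k c j x))\<^sup>2 \<le> (real p + 1) * Dsq p k \<theta> c j / 16" .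
    show "((\<theta> j - c j) * (psi (uu p k \<theta> j x) - psi (uu p k c j x)))\<^sup>2 \<le> (\<theta> j - c j)\<^sup>2 * ((real p + 1) * Dsq p k \<theta> c j / 16)"
      using mult_left_mono[OF hh, of "(\<theta> j - c j)\<^sup>2"] by (simp add: power_mult_distrib)
  qed simp
  also have "\<dots> = P2 p k c \<theta>"
    unfolding P2_def Dsq_def by (simp add: sum_distrib_left sum_distrib_right sum_divide_distrib mult_ac)
  finally show ?thesis .
qed

lemma TT4_bound:
  assumes x: "x \<in> space (Nc p)"
  shows "(TT4 p k c \<theta> x)\<^sup>2 \<le> P4 p k c \<theta>"
proof -
  define r where "r j = psi (uu p k \<theta> j x) - psi (uu p k c j x) - dpsi (uu p k c j x) * (uu p k \<theta> j x - uu p k c j x)" for j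
  have "(TT4 p k c \<theta> x)\<^sup>2 \<le> (\<Sum>j=1..k. (c j)\<^sup>2) * (\<Sum>j=1..k. (r j)\<^sup>2)"
    unfolding TT4_def r_def by (rule Cauchy_Schwarz_ineq_sum)
  also have "\<dots> \<le> Bc p k c * (\<Sum>j=1..k. (real p + 1)\<^sup>2 / 16 * (Dsq p k \<theta> c j)\<^sup>2)"
  proof (rule mult_mono)
    show "(\<Sum>j=1..k. (c j)\<^sup>2) \<le> Bc p k c" by (rule Bc_ge)
    show "(\<Sum>j=1..k. (r j)\<^sup>2) \<le> (\<Sum>j=1..k. (real p + 1)\<^sup>2 / 16 * (Dsq p k \<theta> c j)\<^sup>2)"
    proof (rule sum_mono)
      fix j
      have "(r j)\<^sup>2 \<le> ((DD p k \<theta> c j x)\<^sup>2)\<^sup>2 / 16"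
        using psi_rem_sq[where a="uu p k c j x" and b="uu p k \<theta> j x"] unfolding r_def by (simp add: uu_diff)
      also have "((DD p k \<theta> c j x)\<^sup>2)\<^sup>2 \<le> ((real p + 1) * Dsq p k \<theta> c j)\<^sup>2"
        using DD_bound[OF x, of k \<theta> c j] by (intro power_mono) (simp_all add: Dsq_def add.commute)
      finally show "(r j)\<^sup>2 \<le> (real p + 1)\<^sup>2 / 16 * (Dsq p k \<theta> c j)\<^sup>2"
        by (simp add: power_mult_distrib)
    qed
  qed (auto intro: sum_nonneg Bc_nonneg)
  also have "\<dots> = P4 p k c \<theta>"
    unfolding P4_def Dsq_def by (simp add: power2_eq_square sum_product sum_distrib_left mult_ac)
  finally show ?thesis .
qed



lemma psi_borel[measurable]: "psi \<in> borel_measurable borel"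
  unfolding psi_def[abs_def] by measurable

lemma dpsi_borel[measurable]: "dpsi \<in> borel_measurable borel"
  unfolding dpsi_def[abs_def] by measurable

lemma xt_meas[measurable]: "(\<lambda>x. xt x h) \<in> borel_measurable (Nc p)"
  unfolding xt_def by (cases "h = 0") simp_all

lemma uu_meas[measurable]: "(\<lambda>x. uu p k \<theta> j x) \<in> borel_measurable (Nc p)"
  unfolding uu_def by measurable

lemma nn_f_meas[measurable]: "(\<lambda>x. nn_f p k \<theta> x) \<in> borel_measurable (Nc p)"
  unfolding nn_f_uu by measurable

lemma a1_meas[measurable]: "(\<lambda>x. a1 p k c j x) \<in> borel_measurable (Nc p)"
  unfolding a1_def by measurable

lemma a3_meas[measurable]: "(\<lambda>x. a3 p k c m x) \<in> borel_measurable (Nc p)"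
  unfolding a3_def by measurable

lemma a1_bound: "\<bar>a1 p k c j x\<bar> \<le> 1"
  unfolding a1_def using psi_abs_le1 by auto

lemma a3_bound: "x \<in> space (Nc p) \<Longrightarrow> m \<in> S3 k p \<Longrightarrow> \<bar>a3 p k c m x\<bar> \<le> \<bar>c (fst m)\<bar> / 4"
proof -
  assume x: "x \<in> space (Nc p)" and m: "m \<in> S3 k p"
  have "\<bar>xt x (snd m)\<bar> \<le> 1" using xt_bound[OF x] m by (auto simp: S3_def)
  moreover have "\<bar>dpsi (uu p k c (fst m) x)\<bar> \<le> 1/4" by (rule abs_dpsi)
  ultimately have "\<bar>dpsi (uu p k c (fst m) x)\<bar> * \<bar>xt x (snd m)\<bar> \<le> 1/4 * 1"
    by (intro mult_mono) auto
  then have "\<bar>c (fst m)\<bar> * (\<bar>dpsi (uu p k c (fst m) x)\<bar> * \<bar>xt x (snd m)\<bar>) \<le> \<bar>c (fst m)\<bar> * (1/4)"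
    by (intro mult_left_mono) auto
  then show ?thesis by (simp add: a3_def abs_mult mult_ac)
qed

lemma nn_f_bound: "\<bar>nn_f p k \<theta> x\<bar> \<le> \<bar>\<theta> 0\<bar> + (\<Sum>j=1..k. \<bar>\<theta> j\<bar>)"
proof -
  have "\<bar>nn_f p k \<theta> x\<bar> \<le> \<bar>\<theta> 0\<bar> + \<bar>\<Sum>j=1..k. \<theta> j * psi (uu p k \<theta> j x)\<bar>"
    unfolding nn_f_uu by (rule abs_triangle_ineq)
  also have "\<bar>\<Sum>j=1..k. \<theta> j * psi (uu p k \<theta> j x)\<bar> \<le> (\<Sum>j=1..k. \<bar>\<theta> j * psi (uu p k \<theta> j x)\<bar>)"
    by (rule sum_abs)
  also have "\<dots> \<le> (\<Sum>j=1..k. \<bar>\<theta> j\<bar>)"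
  proof (rule sum_mono)
    fix j
    have "\<bar>\<theta> j\<bar> * \<bar>psi (uu p k \<theta> j x)\<bar> \<le> \<bar>\<theta> j\<bar> * 1"
      using psi_abs_le1 by (intro mult_left_mono) auto
    then show "\<bar>\<theta> j * psi (uu p k \<theta> j x)\<bar> \<le> \<bar>\<theta> j\<bar>" by (simp add: abs_mult)
  qed
  finally show ?thesis by simp
qed

lemma sq_int:
  assumes f0: "square_integrable_cube p f0"
  shows "integrable (Nc p) (\<lambda>x. (nn_f p k \<theta> x - f0 x)\<^sup>2)"
proof -
  define C where "C = \<bar>\<theta> 0\<bar> + (\<Sum>j=1..k. \<bar>\<theta> j\<bar>)"
  have f0m[measurable]: "f0 \<in> borel_measurable (Nc p)" using f0_Nc[OF f0] by simp
  interpret prob_space "Nc p" by (rule prob_Nc)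
  show ?thesis
  proof (rule Bochner_Integration.integrable_bound)
    show "integrable (Nc p) (\<lambda>x. 2 * C\<^sup>2 + 2 * (f0 x)\<^sup>2)"
      using f0_Nc(2)[OF f0] by auto
    show "(\<lambda>x. (nn_f p k \<theta> x - f0 x)\<^sup>2) \<in> borel_measurable (Nc p)" by measurable
    show "AE x in Nc p. norm ((nn_f p k \<theta> x - f0 x)\<^sup>2) \<le> norm (2 * C\<^sup>2 + 2 * (f0 x)\<^sup>2)"
    proof (rule AE_I2)
      fix x
      have b: "\<bar>nn_f p k \<theta> x\<bar> \<le> C" unfolding C_def by (rule nn_f_bound)
      have "(nn_f p k \<theta> x)\<^sup>2 \<le> C\<^sup>2" using b by (metis abs_le_square_iff abs_of_nonneg abs_ge_zero order_trans)
      moreover have "(nn_f p k \<theta> x - f0 x)\<^sup>2 \<le> 2 * (nn_f p k \<theta> x)\<^sup>2 + 2 * (f0 x)\<^sup>2"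
        using sum_squared_le_sum_of_squares_2 by (smt (verit) zero_le_power2 power2_diff power2_sum)
      ultimately show "norm ((nn_f p k \<theta> x - f0 x)\<^sup>2) \<le> norm (2 * C\<^sup>2 + 2 * (f0 x)\<^sup>2)"
        by simp
    qed
  qed
qed



definition M1 where "M1 p k c m m' = (\<integral>x. a1 p k c m x * a1 p k c m' x \<partial>Nc p)"
definition M3 where "M3 p k c m m' = (\<integral>x. a3 p k c m x * a3 p k c m' x \<partial>Nc p)"
definition G1 :: "nat \<Rightarrow> nat \<Rightarrow> (nat \<Rightarrow> real) \<Rightarrow> (nat \<Rightarrow> real) \<Rightarrow> real" where
  "G1 p k c \<theta> = (\<Sum>m\<in>{0..k}. \<Sum>m'\<in>{0..k}. (\<theta> m - c m) * (\<theta> m' - c m') * M1 p k c m m')"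
definition G3 :: "nat \<Rightarrow> nat \<Rightarrow> (nat \<Rightarrow> real) \<Rightarrow> (nat \<Rightarrow> real) \<Rightarrow> real" where
  "G3 p k c \<theta> = (\<Sum>m\<in>S3 k p. \<Sum>m'\<in>S3 k p. (\<theta> (ig k p m) - c (ig k p m)) * (\<theta> (ig k p m') - c (ig k p m')) * M3 p k c m m')"
definition QQ where
  "QQ p k f0 c \<theta> = 2 * nn_h p k f0 c + 8 * (G1 p k c \<theta> + G3 p k c \<theta> + P2 p k c \<theta> + P4 p k c \<theta>)"

lemma finite_S3: "finite (S3 k p)" by (simp add: S3_def)

lemma LL1_int:
  shows "integrable (Nc p) (\<lambda>x. (LL1 p k c \<theta> x)\<^sup>2)"
    "(\<integral>x. (LL1 p k c \<theta> x)\<^sup>2 \<partial>Nc p) = G1 p k c \<theta>"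
    "\<And>m. m \<in> {0..k} \<Longrightarrow> M1 p k c m m \<le> 1"
proof -
  note q = quad_x[OF prob_Nc, where S="{0..k}" and a="a1 p k c" and A="\<lambda>_. 1"]
  have h: "\<And>m. m \<in> {0..k} \<Longrightarrow> (\<lambda>x. a1 p k c m x) \<in> borel_measurable (Nc p)"
     "\<And>m x. m \<in> {0..k} \<Longrightarrow> x \<in> space (Nc p) \<Longrightarrow> \<bar>a1 p k c m x\<bar> \<le> 1"
    using a1_bound by auto
  show "integrable (Nc p) (\<lambda>x. (LL1 p k c \<theta> x)\<^sup>2)"
    unfolding LL1_def using q(1)[where w="\<lambda>j. \<theta> j - c j"] h by simp
  show "(\<integral>x. (LL1 p k c \<theta> x)\<^sup>2 \<partial>Nc p) = G1 p k c \<theta>"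
    unfolding LL1_def G1_def M1_def using q(2)[where w="\<lambda>j. \<theta> j - c j"] h by simp
  show "\<And>m. m \<in> {0..k} \<Longrightarrow> M1 p k c m m \<le> 1"
    unfolding M1_def using q(3) h by simp
qed

lemma LL3_int:
  shows "integrable (Nc p) (\<lambda>x. (LL3 p k c \<theta> x)\<^sup>2)"
    "(\<integral>x. (LL3 p k c \<theta> x)\<^sup>2 \<partial>Nc p) = G3 p k c \<theta>"
    "\<And>m. m \<in> S3 k p \<Longrightarrow> M3 p k c m m \<le> (c (fst m))\<^sup>2 / 16"
proof -
  note q = quad_x[OF prob_Nc finite_S3[of k p], where a="a3 p k c" and A="\<lambda>m. \<bar>c (fst m)\<bar> / 4"]
  have h: "\<And>m. m \<in> S3 k p \<Longrightarrow> (\<lambda>x. a3 p k c m x) \<in> borel_measurable (Nc p)"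
     "\<And>m x. m \<in> S3 k p \<Longrightarrow> x \<in> space (Nc p) \<Longrightarrow> \<bar>a3 p k c m x\<bar> \<le> \<bar>c (fst m)\<bar> / 4"
    using a3_bound by auto
  show "integrable (Nc p) (\<lambda>x. (LL3 p k c \<theta> x)\<^sup>2)"
    unfolding LL3_def using q(1)[where w="\<lambda>m. \<theta> (ig k p m) - c (ig k p m)"] h by simp
  show "(\<integral>x. (LL3 p k c \<theta> x)\<^sup>2 \<partial>Nc p) = G3 p k c \<theta>"
    unfolding LL3_def G3_def M3_def using q(2)[where w="\<lambda>m. \<theta> (ig k p m) - c (ig k p m)"] h by simp
  show "M3 p k c m m \<le> (c (fst m))\<^sup>2 / 16" if m: "m \<in> S3 k p" for m
  proof -
    have "(\<integral>x. a3 p k c m x * a3 p k c m x \<partial>Nc p) \<le> (\<bar>c (fst m)\<bar> / 4)\<^sup>2"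
      by (rule q(3)) (use h m in auto)
    then show ?thesis by (simp add: M3_def power_divide)
  qed
qed

lemma pt_bound:
  assumes x: "x \<in> space (Nc p)"
  shows "(nn_f p k \<theta> x - f0 x)\<^sup>2 \<le> 2 * (nn_f p k c x - f0 x)\<^sup>2 + 8 * (LL1 p k c \<theta> x)\<^sup>2
     + 8 * (LL3 p k c \<theta> x)\<^sup>2 + 8 * P2 p k c \<theta> + 8 * P4 p k c \<theta>"
proof -
  define e where "e = nn_f p k \<theta> x - nn_f p k c x"
  define d where "d = nn_f p k c x - f0 x"
  have "(nn_f p k \<theta> x - f0 x)\<^sup>2 = (e + d)\<^sup>2" by (simp add: e_def d_def)
  also have "\<dots> \<le> 2 * e\<^sup>2 + 2 * d\<^sup>2"
  proof -
    have "0 \<le> (e - d)\<^sup>2" by simp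
    then show ?thesis by (simp add: power2_eq_square algebra_simps)
  qed
  also have "e\<^sup>2 \<le> 4 * ((LL1 p k c \<theta> x)\<^sup>2 + (LL3 p k c \<theta> x)\<^sup>2 + (TT2 p k c \<theta> x)\<^sup>2 + (TT4 p k c \<theta> x)\<^sup>2)"
    unfolding e_def decomp by (rule sq4)
  also have "\<dots> \<le> 4 * ((LL1 p k c \<theta> x)\<^sup>2 + (LL3 p k c \<theta> x)\<^sup>2 + P2 p k c \<theta> + P4 p k c \<theta>)"
    using TT2_bound[OF x, of k c \<theta>] TT4_bound[OF x, of k c \<theta>] by simp
  finally show ?thesis by (simp add: d_def algebra_simps)
qed

lemma h_bound:
  assumes f0: "square_integrable_cube p f0"
  shows "nn_h p k f0 \<theta> \<le> QQ p k f0 c \<theta>"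
proof -
  interpret prob_space "Nc p" by (rule prob_Nc)
  note i1 = sq_int[OF f0, of k c] and i2 = LL1_int(1)[of p k c \<theta>] and i3 = LL3_int(1)[of p k c \<theta>]
  have "nn_h p k f0 \<theta> = (\<integral>x. (nn_f p k \<theta> x - f0 x)\<^sup>2 \<partial>Nc p)"
    unfolding nn_h_def sqL2_Nc ..
  also have "\<dots> \<le> (\<integral>x. 2 * (nn_f p k c x - f0 x)\<^sup>2 + 8 * (LL1 p k c \<theta> x)\<^sup>2
     + 8 * (LL3 p k c \<theta> x)\<^sup>2 + 8 * P2 p k c \<theta> + 8 * P4 p k c \<theta> \<partial>Nc p)"
    by (rule integral_mono) (use sq_int[OF f0, of k \<theta>] i1 i2 i3 pt_bound in auto)
  also have "\<dots> = 2 * (\<integral>x. (nn_f p k c x - f0 x)\<^sup>2 \<partial>Nc p) + 8 * (\<integral>x. (LL1 p k c \<theta> x)\<^sup>2 \<partial>Nc p)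
     + 8 * (\<integral>x. (LL3 p k c \<theta> x)\<^sup>2 \<partial>Nc p) + 8 * P2 p k c \<theta> + 8 * P4 p k c \<theta>"
    using i1 i2 i3 by (simp add: prob_space)
  also have "\<dots> = QQ p k f0 c \<theta>"
    unfolding QQ_def LL1_int(2) LL3_int(2) nn_h_def sqL2_Nc by (simp add: algebra_simps)
  finally show ?thesis .
qed



lemma gp_nonneg: "0 < s \<Longrightarrow> 0 \<le> gauss_prod s \<tau> K c \<theta>"
  unfolding gauss_prod_def by (intro prod_nonneg) auto

lemma gp_meas[measurable]: "(\<lambda>\<theta>. gauss_prod s \<tau> K c \<theta>) \<in> borel_measurable (param_measure K)"
  unfolding gauss_prod_def by measurable

lemma h_meas:
  assumes f0: "square_integrable_cube p f0"
  shows "(\<lambda>\<theta>. nn_h p k f0 \<theta>) \<in> borel_measurable (param_measure K)"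
proof -
  interpret prob_space "Nc p" by (rule prob_Nc)
  have f0m[measurable]: "f0 \<in> borel_measurable (Nc p)" using f0_Nc[OF f0] by simp
  have "(\<lambda>(\<theta>, x). (nn_f p k \<theta> x - f0 x)\<^sup>2) \<in> borel_measurable (param_measure K \<Otimes>\<^sub>M Nc p)"
    unfolding nn_f_uu uu_def by measurable
  then have "(\<lambda>\<theta>. \<integral>x. (nn_f p k \<theta> x - f0 x)\<^sup>2 \<partial>Nc p) \<in> borel_measurable (param_measure K)"
    by (rule borel_measurable_lebesgue_integral)
  then show ?thesis unfolding nn_h_def sqL2_Nc .
qed



lemma G1_int:
  assumes s: "0 < s" "0 < \<tau>"
  shows "integrable (param_measure (nn_K p k)) (\<lambda>\<theta>. G1 p k c \<theta> * gauss_prod s \<tau> (nn_K p k) c \<theta>)"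
    "(\<integral>\<theta>. G1 p k c \<theta> * gauss_prod s \<tau> (nn_K p k) c \<theta> \<partial>param_measure (nn_K p k)) \<le> \<tau>\<^sup>2 / s * (real k + 1)"
proof -
  have S: "finite {0..k}" "inj_on (\<lambda>m. m) {0..k}" "\<And>m. m \<in> {0..k} \<Longrightarrow> m < nn_K p k"
    by (auto simp: nn_K_def)
  note q = quad_theta[OF s S, where c=c and M="M1 p k c"]
  show "integrable (param_measure (nn_K p k)) (\<lambda>\<theta>. G1 p k c \<theta> * gauss_prod s \<tau> (nn_K p k) c \<theta>)"
    using q(1) unfolding G1_def by simp
  have "(\<integral>\<theta>. G1 p k c \<theta> * gauss_prod s \<tau> (nn_K p k) c \<theta> \<partial>param_measure (nn_K p k)) = \<tau>\<^sup>2 / s * (\<Sum>m\<in>{0..k}. M1 p k c m m)"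
    using q(2) unfolding G1_def by simp
  also have "\<dots> \<le> \<tau>\<^sup>2 / s * (\<Sum>m\<in>{0..k}. 1)"
    using LL1_int(3) s by (intro mult_left_mono sum_mono) auto
  finally show "(\<integral>\<theta>. G1 p k c \<theta> * gauss_prod s \<tau> (nn_K p k) c \<theta> \<partial>param_measure (nn_K p k)) \<le> \<tau>\<^sup>2 / s * (real k + 1)"
    by (simp add: add.commute)
qed

lemma sum_S3: fixes f :: "nat \<Rightarrow> real" shows "(\<Sum>m\<in>S3 k p. f (fst m)) = (real p + 1) * (\<Sum>j=1..k. f j)"
proof -
  have "(\<Sum>j=1..k. \<Sum>h=0..p. f j) = (\<Sum>(j,h)\<in>{1..k}\<times>{0..p}. f j)" by (rule sum.cartesian_product)
  also have "\<dots> = (\<Sum>m\<in>S3 k p. f (fst m))" unfolding S3_def by (simp add: split_def)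
  finally have "(\<Sum>m\<in>S3 k p. f (fst m)) = (\<Sum>j=1..k. \<Sum>h=0..p. f j)" ..
  then show ?thesis by (simp add: sum_distrib_left add.commute)
qed

lemma G3_int:
  assumes s: "0 < s" "0 < \<tau>"
  shows "integrable (param_measure (nn_K p k)) (\<lambda>\<theta>. G3 p k c \<theta> * gauss_prod s \<tau> (nn_K p k) c \<theta>)"
    "(\<integral>\<theta>. G3 p k c \<theta> * gauss_prod s \<tau> (nn_K p k) c \<theta> \<partial>param_measure (nn_K p k)) \<le> \<tau>\<^sup>2 / s * ((real p + 1) * Bc p k c / 16)"
proof -
  have S: "finite (S3 k p)" "inj_on (ig k p) (S3 k p)" "\<And>m. m \<in> S3 k p \<Longrightarrow> ig k p m < nn_K p k"
    using gi_inj[of k p] gi_bound by (auto simp: S3_def ig_def[abs_def])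
  note q = quad_theta[OF s S, where c=c and M="M3 p k c"]
  show "integrable (param_measure (nn_K p k)) (\<lambda>\<theta>. G3 p k c \<theta> * gauss_prod s \<tau> (nn_K p k) c \<theta>)"
    using q(1) unfolding G3_def by simp
  have "(\<integral>\<theta>. G3 p k c \<theta> * gauss_prod s \<tau> (nn_K p k) c \<theta> \<partial>param_measure (nn_K p k)) = \<tau>\<^sup>2 / s * (\<Sum>m\<in>S3 k p. M3 p k c m m)"
    using q(2) unfolding G3_def by simp
  also have "\<dots> \<le> \<tau>\<^sup>2 / s * ((real p + 1) * Bc p k c / 16)"
  proof (rule mult_left_mono)
    have "(\<Sum>m\<in>S3 k p. M3 p k c m m) \<le> (\<Sum>m\<in>S3 k p. (c (fst m))\<^sup>2 / 16)"
      using LL3_int(3) by (intro sum_mono) auto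
    also have "(\<Sum>m\<in>S3 k p. (c (fst m))\<^sup>2 / 16) = (real p + 1) * (\<Sum>j=1..k. (c j)\<^sup>2 / 16)"
      by (rule sum_S3)
    also have "\<dots> \<le> (real p + 1) * Bc p k c / 16"
      using Bc_ge[where k=k and c=c and p=p] by (simp add: sum_divide_distrib[symmetric])
    finally show "(\<Sum>m\<in>S3 k p. M3 p k c m m) \<le> (real p + 1) * Bc p k c / 16" .
  qed (use s in simp)
  finally show "(\<integral>\<theta>. G3 p k c \<theta> * gauss_prod s \<tau> (nn_K p k) c \<theta> \<partial>param_measure (nn_K p k)) \<le> \<tau>\<^sup>2 / s * ((real p + 1) * Bc p k c / 16)" .
qed



lemma int_sum2:
  fixes F :: "'i \<Rightarrow> 'j \<Rightarrow> 'a \<Rightarrow> real"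
  assumes "\<And>i j. i \<in> A \<Longrightarrow> j \<in> B \<Longrightarrow> integrable M (F i j)"
  shows "integrable M (\<lambda>x. \<Sum>i\<in>A. \<Sum>j\<in>B. F i j x)"
    "(\<integral>x. (\<Sum>i\<in>A. \<Sum>j\<in>B. F i j x) \<partial>M) = (\<Sum>i\<in>A. \<Sum>j\<in>B. integral\<^sup>L M (F i j))"
proof -
  have I1: "\<And>i. i \<in> A \<Longrightarrow> integrable M (\<lambda>x. \<Sum>j\<in>B. F i j x)"
    using assms by (intro Bochner_Integration.integrable_sum) auto
  show "integrable M (\<lambda>x. \<Sum>i\<in>A. \<Sum>j\<in>B. F i j x)"
    using I1 by (rule Bochner_Integration.integrable_sum)
  have "(\<integral>x. (\<Sum>i\<in>A. \<Sum>j\<in>B. F i j x) \<partial>M) = (\<Sum>i\<in>A. \<integral>x. (\<Sum>j\<in>B. F i j x) \<partial>M)"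
    using I1 by (rule Bochner_Integration.integral_sum)
  also have "\<dots> = (\<Sum>i\<in>A. \<Sum>j\<in>B. integral\<^sup>L M (F i j))"
    using assms by (intro sum.cong refl Bochner_Integration.integral_sum) auto
  finally show "(\<integral>x. (\<Sum>i\<in>A. \<Sum>j\<in>B. F i j x) \<partial>M) = (\<Sum>i\<in>A. \<Sum>j\<in>B. integral\<^sup>L M (F i j))" .
qed

lemma int_sum3:
  fixes F :: "'i \<Rightarrow> 'j \<Rightarrow> 'k \<Rightarrow> 'a \<Rightarrow> real"
  assumes "\<And>i j l. i \<in> A \<Longrightarrow> j \<in> B \<Longrightarrow> l \<in> C \<Longrightarrow> integrable M (F i j l)"
  shows "integrable M (\<lambda>x. \<Sum>i\<in>A. \<Sum>j\<in>B. \<Sum>l\<in>C. F i j l x)"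
    "(\<integral>x. (\<Sum>i\<in>A. \<Sum>j\<in>B. \<Sum>l\<in>C. F i j l x) \<partial>M) = (\<Sum>i\<in>A. \<Sum>j\<in>B. \<Sum>l\<in>C. integral\<^sup>L M (F i j l))"
proof -
  have I1: "\<And>i j. i \<in> A \<Longrightarrow> j \<in> B \<Longrightarrow> integrable M (\<lambda>x. \<Sum>l\<in>C. F i j l x)"
    using assms by (intro Bochner_Integration.integrable_sum) auto
  note r = int_sum2[of A B M "\<lambda>i j x. \<Sum>l\<in>C. F i j l x", OF I1]
  show "integrable M (\<lambda>x. \<Sum>i\<in>A. \<Sum>j\<in>B. \<Sum>l\<in>C. F i j l x)" using r(1) by simp
  have "(\<integral>x. (\<Sum>i\<in>A. \<Sum>j\<in>B. \<Sum>l\<in>C. F i j l x) \<partial>M) = (\<Sum>i\<in>A. \<Sum>j\<in>B. \<integral>x. (\<Sum>l\<in>C. F i j l x) \<partial>M)"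
    using r(2) by simp
  also have "\<dots> = (\<Sum>i\<in>A. \<Sum>j\<in>B. \<Sum>l\<in>C. integral\<^sup>L M (F i j l))"
    using assms by (intro sum.cong refl Bochner_Integration.integral_sum) auto
  finally show "(\<integral>x. (\<Sum>i\<in>A. \<Sum>j\<in>B. \<Sum>l\<in>C. F i j l x) \<partial>M) = (\<Sum>i\<in>A. \<Sum>j\<in>B. \<Sum>l\<in>C. integral\<^sup>L M (F i j l))" .
qed

lemma P2_int:
  fixes p k :: nat and c :: "nat \<Rightarrow> real"
  assumes s: "0 < s" "0 < \<tau>"
  defines "K \<equiv> nn_K p k"
  shows "integrable (param_measure K) (\<lambda>\<theta>. P2 p k c \<theta> * gauss_prod s \<tau> K c \<theta>)"
    "(\<integral>\<theta>. P2 p k c \<theta> * gauss_prod s \<tau> K c \<theta> \<partial>param_measure K)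
       \<le> real k * (real p + 1) / 16 * (real k * (real p + 1) * (3 * (\<tau>\<^sup>2 / s)\<^sup>2))"
proof -
  define F where "F j h \<theta> = (\<theta> j - c j)\<^sup>2 * (\<theta> (gi k p j h) - c (gi k p j h))\<^sup>2 * gauss_prod s \<tau> K c \<theta>" for j h \<theta>
  have idx: "\<And>j h. j \<in> {1..k} \<Longrightarrow> h \<in> {0..p} \<Longrightarrow> j < K \<and> gi k p j h < K"
    using gi_bound unfolding K_def by (auto simp: nn_K_def)
  have I: "\<And>j h. j \<in> {1..k} \<Longrightarrow> h \<in> {0..p} \<Longrightarrow> integrable (param_measure K) (F j h)"
    unfolding F_def[abs_def] using idx E4(1)[OF s] by blast
  have B: "\<And>j h. j \<in> {1..k} \<Longrightarrow> h \<in> {0..p} \<Longrightarrow> (\<integral>\<theta>. F j h \<theta> \<partial>param_measure K) \<le> 3 * (\<tau>\<^sup>2 / s)\<^sup>2"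
    unfolding F_def using idx E4(2)[OF s] by blast
  have eq: "(\<lambda>\<theta>. P2 p k c \<theta> * gauss_prod s \<tau> K c \<theta>) = (\<lambda>\<theta>. real k * (real p + 1) / 16 * (\<Sum>j=1..k. \<Sum>h=0..p. F j h \<theta>))"
    unfolding P2_def F_def by (rule ext) (simp add: sum_distrib_right mult.assoc)
  have IS: "integrable (param_measure K) (\<lambda>\<theta>. \<Sum>j=1..k. \<Sum>h=0..p. F j h \<theta>)"
  proof (rule Bochner_Integration.integrable_sum)
    fix j assume j: "j \<in> {1..k}"
    show "integrable (param_measure K) (\<lambda>\<theta>. \<Sum>h=0..p. F j h \<theta>)"
    proof (rule Bochner_Integration.integrable_sum)
      fix h assume h: "h \<in> {0..p}"
      show "integrable (param_measure K) (F j h)" by (rule I[OF j h])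
    qed
  qed
  show "integrable (param_measure K) (\<lambda>\<theta>. P2 p k c \<theta> * gauss_prod s \<tau> K c \<theta>)"
    unfolding eq using IS by (rule integrable_mult_right)
  have "(\<integral>\<theta>. P2 p k c \<theta> * gauss_prod s \<tau> K c \<theta> \<partial>param_measure K)
     = real k * (real p + 1) / 16 * (\<Sum>j=1..k. \<Sum>h=0..p. (\<integral>\<theta>. F j h \<theta> \<partial>param_measure K))"
    unfolding eq using int_sum2(2)[of "{1..k}" "{0..p}" "param_measure K" F] I by simp
  also have "\<dots> \<le> real k * (real p + 1) / 16 * (\<Sum>j=1..k. \<Sum>h=0..p. 3 * (\<tau>\<^sup>2 / s)\<^sup>2)"
    using B by (intro mult_left_mono sum_mono) auto
  also have "(\<Sum>j=1..k. \<Sum>h=0..p. 3 * (\<tau>\<^sup>2 / s)\<^sup>2) = real k * (real p + 1) * (3 * (\<tau>\<^sup>2 / s)\<^sup>2)"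
    by simp
  finally show "(\<integral>\<theta>. P2 p k c \<theta> * gauss_prod s \<tau> K c \<theta> \<partial>param_measure K)
       \<le> real k * (real p + 1) / 16 * (real k * (real p + 1) * (3 * (\<tau>\<^sup>2 / s)\<^sup>2))" .
qed

lemma P4_int:
  fixes p k :: nat and c :: "nat \<Rightarrow> real"
  assumes s: "0 < s" "0 < \<tau>"
  defines "K \<equiv> nn_K p k"
  shows "integrable (param_measure K) (\<lambda>\<theta>. P4 p k c \<theta> * gauss_prod s \<tau> K c \<theta>)"
    "(\<integral>\<theta>. P4 p k c \<theta> * gauss_prod s \<tau> K c \<theta> \<partial>param_measure K)
       \<le> Bc p k c * (real p + 1)\<^sup>2 / 16 * (real k * (real p + 1) * (real p + 1) * (3 * (\<tau>\<^sup>2 / s)\<^sup>2))"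
proof -
  define F where "F j h h' \<theta> = (\<theta> (gi k p j h) - c (gi k p j h))\<^sup>2 * (\<theta> (gi k p j h') - c (gi k p j h'))\<^sup>2 * gauss_prod s \<tau> K c \<theta>" for j h h' \<theta>
  have idx: "\<And>j h. j \<in> {1..k} \<Longrightarrow> h \<in> {0..p} \<Longrightarrow> gi k p j h < K"
    using gi_bound unfolding K_def by (auto simp: nn_K_def)
  have I: "\<And>j h h'. j \<in> {1..k} \<Longrightarrow> h \<in> {0..p} \<Longrightarrow> h' \<in> {0..p} \<Longrightarrow> integrable (param_measure K) (F j h h')"
    unfolding F_def[abs_def] using idx E4(1)[OF s] by blast
  have B: "\<And>j h h'. j \<in> {1..k} \<Longrightarrow> h \<in> {0..p} \<Longrightarrow> h' \<in> {0..p} \<Longrightarrow> (\<integral>\<theta>. F j h h' \<theta> \<partial>param_measure K) \<le> 3 * (\<tau>\<^sup>2 / s)\<^sup>2"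
    unfolding F_def using idx E4(2)[OF s] by blast
  have eq: "(\<lambda>\<theta>. P4 p k c \<theta> * gauss_prod s \<tau> K c \<theta>) = (\<lambda>\<theta>. Bc p k c * (real p + 1)\<^sup>2 / 16 * (\<Sum>j=1..k. \<Sum>h=0..p. \<Sum>h'=0..p. F j h h' \<theta>))"
    unfolding P4_def F_def by (rule ext) (simp add: sum_distrib_right mult.assoc)
  have IS: "integrable (param_measure K) (\<lambda>\<theta>. \<Sum>j=1..k. \<Sum>h=0..p. \<Sum>h'=0..p. F j h h' \<theta>)"
  proof (rule Bochner_Integration.integrable_sum)
    fix j assume j: "j \<in> {1..k}"
    show "integrable (param_measure K) (\<lambda>\<theta>. \<Sum>h=0..p. \<Sum>h'=0..p. F j h h' \<theta>)"
    proof (rule Bochner_Integration.integrable_sum)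
      fix h assume h: "h \<in> {0..p}"
      show "integrable (param_measure K) (\<lambda>\<theta>. \<Sum>h'=0..p. F j h h' \<theta>)"
      proof (rule Bochner_Integration.integrable_sum)
        fix h' assume h': "h' \<in> {0..p}"
        show "integrable (param_measure K) (F j h h')" by (rule I[OF j h h'])
      qed
    qed
  qed
  show "integrable (param_measure K) (\<lambda>\<theta>. P4 p k c \<theta> * gauss_prod s \<tau> K c \<theta>)"
    unfolding eq using IS by (rule integrable_mult_right)
  have "(\<integral>\<theta>. P4 p k c \<theta> * gauss_prod s \<tau> K c \<theta> \<partial>param_measure K)
     = Bc p k c * (real p + 1)\<^sup>2 / 16 * (\<Sum>j=1..k. \<Sum>h=0..p. \<Sum>h'=0..p. (\<integral>\<theta>. F j h h' \<theta> \<partial>param_measure K))"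
    unfolding eq using int_sum3(2)[of "{1..k}" "{0..p}" "{0..p}" "param_measure K" F] I by simp
  also have "\<dots> \<le> Bc p k c * (real p + 1)\<^sup>2 / 16 * (\<Sum>j=1..k. \<Sum>h=0..p. \<Sum>h'=0..p. 3 * (\<tau>\<^sup>2 / s)\<^sup>2)"
    using B Bc_nonneg[of p k c] by (intro mult_left_mono sum_mono) auto
  also have "(\<Sum>j=1..k. \<Sum>h=0..p. \<Sum>h'=0..p. 3 * (\<tau>\<^sup>2 / s)\<^sup>2) = real k * (real p + 1) * (real p + 1) * (3 * (\<tau>\<^sup>2 / s)\<^sup>2)"
    by (simp add: add.commute)
  finally show "(\<integral>\<theta>. P4 p k c \<theta> * gauss_prod s \<tau> K c \<theta> \<partial>param_measure K)
       \<le> Bc p k c * (real p + 1)\<^sup>2 / 16 * (real k * (real p + 1) * (real p + 1) * (3 * (\<tau>\<^sup>2 / s)\<^sup>2))" .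
qed



lemma nn_h_nonneg: "0 \<le> nn_h p k f0 \<theta>"
  unfolding nn_h_def sqL2_Nc by (rule Bochner_Integration.integral_nonneg) simp

definition bnd :: "nat \<Rightarrow> nat \<Rightarrow> real \<Rightarrow> real \<Rightarrow> real \<Rightarrow> real" where
  "bnd p k B h0 \<sigma>2 = 2 * h0 + 8 * (\<sigma>2 * (real k + 1) + \<sigma>2 * ((real p + 1) * B / 16)
     + real k * (real p + 1) / 16 * (real k * (real p + 1) * (3 * \<sigma>2\<^sup>2))
     + B * (real p + 1)\<^sup>2 / 16 * (real k * (real p + 1) * (real p + 1) * (3 * \<sigma>2\<^sup>2)))"

lemma main_bound:
  fixes p k :: nat and c :: "nat \<Rightarrow> real"
  assumes f0: "square_integrable_cube p f0" and s: "0 < s" "0 < \<tau>"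
  defines "K \<equiv> nn_K p k"
  shows "integrable (param_measure K) (\<lambda>\<theta>. nn_h p k f0 \<theta> * gauss_prod s \<tau> K c \<theta>)"
    "(\<integral>\<theta>. nn_h p k f0 \<theta> * gauss_prod s \<tau> K c \<theta> \<partial>param_measure K)
       \<le> bnd p k (Bc p k c) (nn_h p k f0 c) (\<tau>\<^sup>2 / s)"
proof -
  let ?g = "gauss_prod s \<tau> K c"
  note i0 = E0(1)[OF s, of K c] and i1 = G1_int(1)[OF s, of p k c] and i2 = G3_int(1)[OF s, of p k c]
    and i3 = P2_int(1)[OF s, of p k c] and i4 = P4_int(1)[OF s, of p k c]
  note b1 = G1_int(2)[OF s, of p k c] and b2 = G3_int(2)[OF s, of p k c]
    and b3 = P2_int(2)[OF s, of p k c] and b4 = P4_int(2)[OF s, of p k c]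
  have eq: "(\<lambda>\<theta>. QQ p k f0 c \<theta> * ?g \<theta>) = (\<lambda>\<theta>. 2 * nn_h p k f0 c * ?g \<theta> + 8 * (G1 p k c \<theta> * ?g \<theta>
     + G3 p k c \<theta> * ?g \<theta> + P2 p k c \<theta> * ?g \<theta> + P4 p k c \<theta> * ?g \<theta>))"
    unfolding QQ_def by (rule ext) (simp add: algebra_simps)
  have iQ: "integrable (param_measure K) (\<lambda>\<theta>. QQ p k f0 c \<theta> * ?g \<theta>)"
    unfolding eq using i0 i1 i2 i3 i4 unfolding K_def by simp
  have "(\<integral>\<theta>. QQ p k f0 c \<theta> * ?g \<theta> \<partial>param_measure K) = 2 * nn_h p k f0 c * (\<integral>\<theta>. ?g \<theta> \<partial>param_measure K)
     + 8 * ((\<integral>\<theta>. G1 p k c \<theta> * ?g \<theta> \<partial>param_measure K) + (\<integral>\<theta>. G3 p k c \<theta> * ?g \<theta> \<partial>param_measure K)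
      + (\<integral>\<theta>. P2 p k c \<theta> * ?g \<theta> \<partial>param_measure K) + (\<integral>\<theta>. P4 p k c \<theta> * ?g \<theta> \<partial>param_measure K))"
    unfolding eq using i0 i1 i2 i3 i4 unfolding K_def by simp
  also have "\<dots> \<le> bnd p k (Bc p k c) (nn_h p k f0 c) (\<tau>\<^sup>2 / s)"
    unfolding bnd_def E0(2)[OF s] K_def mult_1_right
    by (intro add_left_mono mult_left_mono add_mono b1 b2 b3 b4) simp
  finally have bQ: "(\<integral>\<theta>. QQ p k f0 c \<theta> * ?g \<theta> \<partial>param_measure K) \<le> bnd p k (Bc p k c) (nn_h p k f0 c) (\<tau>\<^sup>2 / s)" .
  have le: "nn_h p k f0 \<theta> * ?g \<theta> \<le> QQ p k f0 c \<theta> * ?g \<theta>" for \<theta>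
    using h_bound[OF f0, of k \<theta> c] gp_nonneg[OF s(1)] by (intro mult_right_mono) auto
  have ge: "0 \<le> nn_h p k f0 \<theta> * ?g \<theta>" for \<theta>
    using nn_h_nonneg gp_nonneg[OF s(1)] by simp
  have hm[measurable]: "(\<lambda>\<theta>. nn_h p k f0 \<theta>) \<in> borel_measurable (param_measure K)" by (rule h_meas[OF f0])
  show ih: "integrable (param_measure K) (\<lambda>\<theta>. nn_h p k f0 \<theta> * ?g \<theta>)"
  proof (rule Bochner_Integration.integrable_bound[OF iQ])
    show "(\<lambda>\<theta>. nn_h p k f0 \<theta> * ?g \<theta>) \<in> borel_measurable (param_measure K)" by measurable
    show "AE \<theta> in param_measure K. norm (nn_h p k f0 \<theta> * ?g \<theta>) \<le> norm (QQ p k f0 c \<theta> * ?g \<theta>)"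
      using le ge by (intro AE_I2) (metis abs_of_nonneg order_trans real_norm_def)
  qed
  have "(\<integral>\<theta>. nn_h p k f0 \<theta> * ?g \<theta> \<partial>param_measure K) \<le> (\<integral>\<theta>. QQ p k f0 c \<theta> * ?g \<theta> \<partial>param_measure K)"
    using ih iQ le by (intro integral_mono) auto
  then show "(\<integral>\<theta>. nn_h p k f0 \<theta> * ?g \<theta> \<partial>param_measure K) \<le> bnd p k (Bc p k c) (nn_h p k f0 c) (\<tau>\<^sup>2 / s)"
    using bQ by linarith
qed



lemma pw_o: "e < d \<Longrightarrow> (\<lambda>n::nat. real n powr e) \<in> o(\<lambda>n. real n powr d)"
  by (rule powr_smallo_iff[THEN iffD2]) (auto intro: filterlim_real_sequentially)

lemma O_to_o: "f \<in> O(\<lambda>n::nat. real n powr e) \<Longrightarrow> e < d \<Longrightarrow> f \<in> o(\<lambda>n. real n powr d)"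
  using landau_o.big_small_trans pw_o by blast

lemma Opow_mult:
  fixes f g :: "nat \<Rightarrow> real"
  assumes "f \<in> O(\<lambda>n. real n powr a)" "g \<in> O(\<lambda>n. real n powr b)"
  shows "(\<lambda>n. f n * g n) \<in> O(\<lambda>n. real n powr (a + b))"
  using landau_o.big.mult[OF assms] by (simp add: powr_add)

lemma one_O: "0 \<le> a \<Longrightarrow> (\<lambda>_::nat. 1::real) \<in> O(\<lambda>n. real n powr a)"
proof (rule bigoI[where c=1])
  assume a: "0 \<le> a"
  show "eventually (\<lambda>n::nat. norm (1::real) \<le> 1 * norm (real n powr a)) at_top"
    unfolding eventually_at_top_linorder
    by (rule exI[of _ 1]) (use a ge_one_powr_ge_zero in auto)
qed

lemma ASYM:
  fixes E h0 B s2 :: "nat \<Rightarrow> real" and k :: "nat \<Rightarrow> nat"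
  assumes E_nn: "eventually (\<lambda>n. 0 \<le> E n) at_top"
    and E_le: "eventually (\<lambda>n. E n \<le> bnd p (k n) (B n) (h0 n) (s2 n)) at_top"
    and h0: "h0 \<in> o(\<lambda>n. real n powr d)"
    and t1: "(\<lambda>n. s2 n * (real (k n) + 1)) \<in> o(\<lambda>n. real n powr d)"
    and t2: "(\<lambda>n. s2 n * B n) \<in> o(\<lambda>n. real n powr d)"
    and t3: "(\<lambda>n. real (k n) * s2 n * (real (k n) * s2 n)) \<in> o(\<lambda>n. real n powr d)"
    and t4: "(\<lambda>n. B n * s2 n * (real (k n) * s2 n)) \<in> o(\<lambda>n. real n powr d)"
  shows "E \<in> o(\<lambda>n. real n powr d)"
proof -
  have eq: "(\<lambda>n. bnd p (k n) (B n) (h0 n) (s2 n)) = (\<lambda>n. 2 * h0 n + 8 * (s2 n * (real (k n) + 1))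
     + ((real p + 1) / 2) * (s2 n * B n) + (3 * (real p + 1)\<^sup>2 / 2) * (real (k n) * s2 n * (real (k n) * s2 n))
     + (3 * (real p + 1)^4 / 2) * (B n * s2 n * (real (k n) * s2 n)))"
    by (rule ext) (simp add: bnd_def power2_eq_square power4_eq_xxxx field_simps)
  have p0: "real p + 1 \<noteq> 0" by simp
  have "(\<lambda>n. bnd p (k n) (B n) (h0 n) (s2 n)) \<in> o(\<lambda>n. real n powr d)"
    unfolding eq using h0 t1 t2 t3 t4 p0
    by (intro sum_in_smallo) (simp_all add: landau_o.small.cmult_in_iff)
  moreover have "E \<in> O(\<lambda>n. bnd p (k n) (B n) (h0 n) (s2 n))"
  proof (rule landau_o.big_mono)
    show "eventually (\<lambda>n. norm (E n) \<le> norm (bnd p (k n) (B n) (h0 n) (s2 n))) at_top"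
      using E_nn E_le by eventually_elim simp
  qed
  ultimately show ?thesis using landau_o.big_small_trans by blast
qed



lemma gp_zero: "gauss_prod 0 \<tau> (nn_K p k) c \<theta> = 0"
  unfolding gauss_prod_def by (simp add: nn_K_def)

lemma FIN:
  fixes p :: nat and k :: "nat \<Rightarrow> nat" and \<delta> \<tau> :: real and s :: "nat \<Rightarrow> real"
    and f0 :: "(nat \<Rightarrow> real) \<Rightarrow> real" and \<theta>0 :: "nat \<Rightarrow> nat \<Rightarrow> real"
  assumes f0: "square_integrable_cube p f0" and \<tau>: "0 < \<tau>"
    and s_pos: "\<And>n. n \<ge> 1 \<Longrightarrow> 0 < s n" and s0: "s 0 = 0"
    and h0: "(\<lambda>n. nn_h p (k n) f0 (\<theta>0 n)) \<in> o(\<lambda>n. real n powr d)"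
    and t1: "(\<lambda>n. \<tau>\<^sup>2 / s n * (real (k n) + 1)) \<in> o(\<lambda>n. real n powr d)"
    and t2: "(\<lambda>n. \<tau>\<^sup>2 / s n * Bc p (k n) (\<theta>0 n)) \<in> o(\<lambda>n. real n powr d)"
    and t3: "(\<lambda>n. real (k n) * (\<tau>\<^sup>2 / s n) * (real (k n) * (\<tau>\<^sup>2 / s n))) \<in> o(\<lambda>n. real n powr d)"
    and t4: "(\<lambda>n. Bc p (k n) (\<theta>0 n) * (\<tau>\<^sup>2 / s n) * (real (k n) * (\<tau>\<^sup>2 / s n))) \<in> o(\<lambda>n. real n powr d)"
  shows "(\<forall>n. integrable (param_measure (nn_K p (k n)))
               (\<lambda>\<theta>. nn_h p (k n) f0 \<theta> * gauss_prod (s n) \<tau> (nn_K p (k n)) (\<theta>0 n) \<theta>)) \<and>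
        (\<lambda>n. \<integral>\<theta>. nn_h p (k n) f0 \<theta> * gauss_prod (s n) \<tau> (nn_K p (k n)) (\<theta>0 n) \<theta>
               \<partial>param_measure (nn_K p (k n))) \<in> o(\<lambda>n. real n powr d)"
proof (intro conjI allI)
  fix n
  show "integrable (param_measure (nn_K p (k n)))
               (\<lambda>\<theta>. nn_h p (k n) f0 \<theta> * gauss_prod (s n) \<tau> (nn_K p (k n)) (\<theta>0 n) \<theta>)"
  proof (cases "n = 0")
    case True
    then show ?thesis by (simp add: s0 gp_zero)
  next
    case False
    then have "1 \<le> n" by simp
    then show ?thesis using main_bound(1)[OF f0 s_pos[OF \<open>1 \<le> n\<close>] \<tau>, where k="k n" and c="\<theta>0 n"] by simp
  qed
next
  define E where "E n = (\<integral>\<theta>. nn_h p (k n) f0 \<theta> * gauss_prod (s n) \<tau> (nn_K p (k n)) (\<theta>0 n) \<theta>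
               \<partial>param_measure (nn_K p (k n)))" for n
  have ev: "eventually (\<lambda>n::nat. n \<ge> 1) at_top" by (rule eventually_ge_at_top)
  have E_nn: "eventually (\<lambda>n. 0 \<le> E n) at_top"
    using ev
  proof eventually_elim
    case (elim n)
    show ?case unfolding E_def
      by (rule Bochner_Integration.integral_nonneg)
        (use nn_h_nonneg gp_nonneg[OF s_pos[OF elim]] in simp)
  qed
  have E_le: "eventually (\<lambda>n. E n \<le> bnd p (k n) (Bc p (k n) (\<theta>0 n)) (nn_h p (k n) f0 (\<theta>0 n)) (\<tau>\<^sup>2 / s n)) at_top"
    using ev
  proof eventually_elim
    case (elim n)
    show ?case unfolding E_def using main_bound(2)[OF f0 s_pos[OF elim] \<tau>, where k="k n" and c="\<theta>0 n"] by simp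
  qed
  have "E \<in> o(\<lambda>n. real n powr d)"
    by (rule ASYM[OF E_nn E_le h0 t1 t2 t3 t4])
  then show "(\<lambda>n. \<integral>\<theta>. nn_h p (k n) f0 \<theta> * gauss_prod (s n) \<tau> (nn_K p (k n)) (\<theta>0 n) \<theta>
               \<partial>param_measure (nn_K p (k n))) \<in> o(\<lambda>n. real n powr d)"
    unfolding E_def .
qed



theorem lemma9:
  fixes p :: nat and k :: "nat \<Rightarrow> nat" and a \<delta> \<tau> :: real
    and f0 :: "(nat \<Rightarrow> real) \<Rightarrow> real" and \<theta>0 :: "nat \<Rightarrow> nat \<Rightarrow> real"
  assumes f0: "square_integrable_cube p f0"
    and a: "0 < a" "a < 1"
    and kn: "(\<lambda>n. real (k n)) \<sim>[at_top] (\<lambda>n. real n powr a)"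
    and \<delta>: "0 \<le> \<delta>" "\<delta> < 1 - a"
    and A1: "(\<lambda>n. sqrt (nn_h p (k n) f0 (\<theta>0 n))) \<in> o(\<lambda>n. real n powr (- \<delta>))"
    and \<tau>: "0 < \<tau>"
  shows
    "((\<lambda>n. \<Sum>i<nn_K p (k n). (\<theta>0 n i)\<^sup>2) \<in> o(\<lambda>n. real n powr (1 - \<delta>)) \<longrightarrow>
        (\<forall>n. integrable (param_measure (nn_K p (k n)))
               (\<lambda>\<theta>. nn_h p (k n) f0 \<theta> * gauss_prod (real n) \<tau> (nn_K p (k n)) (\<theta>0 n) \<theta>)) \<and>
        (\<lambda>n. \<integral>\<theta>. nn_h p (k n) f0 \<theta> * gauss_prod (real n) \<tau> (nn_K p (k n)) (\<theta>0 n) \<theta>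
               \<partial>param_measure (nn_K p (k n))) \<in> o(\<lambda>n. real n powr (- \<delta>)))
     \<and>
     (\<forall>v::real. v \<ge> 1 \<longrightarrow>
       (\<lambda>n. \<Sum>i<nn_K p (k n). (\<theta>0 n i)\<^sup>2) \<in> O(\<lambda>n. real n powr v) \<longrightarrow>
        (\<forall>n. integrable (param_measure (nn_K p (k n)))
               (\<lambda>\<theta>. nn_h p (k n) f0 \<theta> * gauss_prod (real n powr (v + 1)) \<tau> (nn_K p (k n)) (\<theta>0 n) \<theta>)) \<and>
        (\<lambda>n. \<integral>\<theta>. nn_h p (k n) f0 \<theta> * gauss_prod (real n powr (v + 1)) \<tau> (nn_K p (k n)) (\<theta>0 n) \<theta>
               \<partial>param_measure (nn_K p (k n))) \<in> o(\<lambda>n. real n powr (- \<delta>)))"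
proof -
  have kO: "(\<lambda>n. real (k n)) \<in> O(\<lambda>n. real n powr a)"
    using asymp_equiv_imp_bigtheta[OF kn] by blast
  have k1O: "(\<lambda>n. real (k n) + 1) \<in> O(\<lambda>n. real n powr a)"
    using sum_in_bigo(1)[OF kO one_O] a by simp
  have h0: "(\<lambda>n. nn_h p (k n) f0 (\<theta>0 n)) \<in> o(\<lambda>n. real n powr (- \<delta>))"
  proof -
    have pO: "(\<lambda>n::nat. real n powr (- \<delta>)) \<in> O(\<lambda>_. 1)"
    proof (rule bigoI[where c=1])
      show "eventually (\<lambda>n::nat. norm (real n powr (- \<delta>)) \<le> 1 * norm (1::real)) at_top"
        unfolding eventually_at_top_linorder
      proof (intro exI allI impI)
        fix n :: nat assume n: "n \<ge> 1"
        have "real n powr (- \<delta>) \<le> real n powr 0" using n \<delta> by (intro powr_mono) auto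
        then show "norm (real n powr (- \<delta>)) \<le> 1 * norm (1::real)" using n by simp
      qed
    qed
    have rO: "(\<lambda>n. sqrt (nn_h p (k n) f0 (\<theta>0 n))) \<in> O(\<lambda>_. 1)"
      using landau_o.small_imp_big[OF A1] pO by (rule landau_o.big_trans)
    have "(\<lambda>n. sqrt (nn_h p (k n) f0 (\<theta>0 n)) * sqrt (nn_h p (k n) f0 (\<theta>0 n))) \<in> o(\<lambda>n. real n powr (- \<delta>) * 1)"
      by (rule landau_o.small_big_mult[OF A1 rO])
    then show ?thesis using nn_h_nonneg by simp
  qed
  show ?thesis
  proof (intro conjI)
   show "(\<lambda>n. \<Sum>i<nn_K p (k n). (\<theta>0 n i)\<^sup>2) \<in> o(\<lambda>n. real n powr (1 - \<delta>)) \<longrightarrow>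
        (\<forall>n. integrable (param_measure (nn_K p (k n)))
               (\<lambda>\<theta>. nn_h p (k n) f0 \<theta> * gauss_prod (real n) \<tau> (nn_K p (k n)) (\<theta>0 n) \<theta>)) \<and>
        (\<lambda>n. \<integral>\<theta>. nn_h p (k n) f0 \<theta> * gauss_prod (real n) \<tau> (nn_K p (k n)) (\<theta>0 n) \<theta>
               \<partial>param_measure (nn_K p (k n))) \<in> o(\<lambda>n. real n powr (- \<delta>))"
   proof
    assume A2: "(\<lambda>n. \<Sum>i<nn_K p (k n). (\<theta>0 n i)\<^sup>2) \<in> o(\<lambda>n. real n powr (1 - \<delta>))"
    have Bo: "(\<lambda>n. Bc p (k n) (\<theta>0 n)) \<in> o(\<lambda>n. real n powr (1 - \<delta>))" using A2 by (simp add: Bc_def)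
    have BO: "(\<lambda>n. Bc p (k n) (\<theta>0 n)) \<in> O(\<lambda>n. real n powr (1 - \<delta>))" using landau_o.small_imp_big[OF Bo] .
    have sO: "(\<lambda>n. \<tau>\<^sup>2 / real n) \<in> O(\<lambda>n. real n powr (- 1))"
      by (intro bigoI[where c="\<tau>\<^sup>2"] always_eventually allI) simp
    have t1: "(\<lambda>n. \<tau>\<^sup>2 / real n * (real (k n) + 1)) \<in> o(\<lambda>n. real n powr (- \<delta>))"
      by (rule O_to_o[OF Opow_mult[OF sO k1O]]) (use \<delta> a in simp)
    have pe: "(\<lambda>n. real n powr (- 1) * real n powr (1 - \<delta>)) = (\<lambda>n. real n powr (- \<delta>))"
      by (rule ext) (subst powr_add[symmetric], simp)
    have t2: "(\<lambda>n. \<tau>\<^sup>2 / real n * Bc p (k n) (\<theta>0 n)) \<in> o(\<lambda>n. real n powr (- \<delta>))"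
      using landau_o.big_small_mult[OF sO Bo] unfolding pe .
    have ks: "(\<lambda>n. real (k n) * (\<tau>\<^sup>2 / real n)) \<in> O(\<lambda>n. real n powr (a + - 1))"
      by (rule Opow_mult[OF kO sO])
    have t3: "(\<lambda>n. real (k n) * (\<tau>\<^sup>2 / real n) * (real (k n) * (\<tau>\<^sup>2 / real n))) \<in> o(\<lambda>n. real n powr (- \<delta>))"
      by (rule O_to_o[OF Opow_mult[OF ks ks]]) (use \<delta> a in simp)
    have t4: "(\<lambda>n. Bc p (k n) (\<theta>0 n) * (\<tau>\<^sup>2 / real n) * (real (k n) * (\<tau>\<^sup>2 / real n))) \<in> o(\<lambda>n. real n powr (- \<delta>))"
      by (rule O_to_o[OF Opow_mult[OF Opow_mult[OF BO sO] ks]]) (use \<delta> a in simp)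
    show "(\<forall>n. integrable (param_measure (nn_K p (k n)))
               (\<lambda>\<theta>. nn_h p (k n) f0 \<theta> * gauss_prod (real n) \<tau> (nn_K p (k n)) (\<theta>0 n) \<theta>)) \<and>
        (\<lambda>n. \<integral>\<theta>. nn_h p (k n) f0 \<theta> * gauss_prod (real n) \<tau> (nn_K p (k n)) (\<theta>0 n) \<theta>
               \<partial>param_measure (nn_K p (k n))) \<in> o(\<lambda>n. real n powr (- \<delta>))"
      using FIN[where s=real, OF f0 \<tau> _ _ h0 t1 t2 t3 t4] by simp
   qed
  next
   show "\<forall>v::real. v \<ge> 1 \<longrightarrow>
       (\<lambda>n. \<Sum>i<nn_K p (k n). (\<theta>0 n i)\<^sup>2) \<in> O(\<lambda>n. real n powr v) \<longrightarrow>
        (\<forall>n. integrable (param_measure (nn_K p (k n)))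
               (\<lambda>\<theta>. nn_h p (k n) f0 \<theta> * gauss_prod (real n powr (v + 1)) \<tau> (nn_K p (k n)) (\<theta>0 n) \<theta>)) \<and>
        (\<lambda>n. \<integral>\<theta>. nn_h p (k n) f0 \<theta> * gauss_prod (real n powr (v + 1)) \<tau> (nn_K p (k n)) (\<theta>0 n) \<theta>
               \<partial>param_measure (nn_K p (k n))) \<in> o(\<lambda>n. real n powr (- \<delta>))"
   proof (intro allI impI)
    fix v :: real
    assume v: "v \<ge> 1" and A3: "(\<lambda>n. \<Sum>i<nn_K p (k n). (\<theta>0 n i)\<^sup>2) \<in> O(\<lambda>n. real n powr v)"
    have BO: "(\<lambda>n. Bc p (k n) (\<theta>0 n)) \<in> O(\<lambda>n. real n powr v)" using A3 by (simp add: Bc_def)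
    have se: "(\<lambda>n. \<tau>\<^sup>2 / real n powr (v + 1)) = (\<lambda>n. \<tau>\<^sup>2 * real n powr (- (v + 1)))"
      by (rule ext) (subst powr_minus_divide, simp)
    have sO: "(\<lambda>n. \<tau>\<^sup>2 / real n powr (v + 1)) \<in> O(\<lambda>n. real n powr (- (v + 1)))" unfolding se using \<tau> by simp
    have t1: "(\<lambda>n. \<tau>\<^sup>2 / real n powr (v + 1) * (real (k n) + 1)) \<in> o(\<lambda>n. real n powr (- \<delta>))"
      by (rule O_to_o[OF Opow_mult[OF sO k1O]]) (use \<delta> a v in simp)
    have t2: "(\<lambda>n. \<tau>\<^sup>2 / real n powr (v + 1) * Bc p (k n) (\<theta>0 n)) \<in> o(\<lambda>n. real n powr (- \<delta>))"
      by (rule O_to_o[OF Opow_mult[OF sO BO]]) (use \<delta> a v in simp)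
    have ks: "(\<lambda>n. real (k n) * (\<tau>\<^sup>2 / real n powr (v + 1))) \<in> O(\<lambda>n. real n powr (a + - (v + 1)))"
      by (rule Opow_mult[OF kO sO])
    have t3: "(\<lambda>n. real (k n) * (\<tau>\<^sup>2 / real n powr (v + 1)) * (real (k n) * (\<tau>\<^sup>2 / real n powr (v + 1)))) \<in> o(\<lambda>n. real n powr (- \<delta>))"
      by (rule O_to_o[OF Opow_mult[OF ks ks]]) (use \<delta> a v in simp)
    have t4: "(\<lambda>n. Bc p (k n) (\<theta>0 n) * (\<tau>\<^sup>2 / real n powr (v + 1)) * (real (k n) * (\<tau>\<^sup>2 / real n powr (v + 1)))) \<in> o(\<lambda>n. real n powr (- \<delta>))"
      by (rule O_to_o[OF Opow_mult[OF Opow_mult[OF BO sO] ks]]) (use \<delta> a v in simp)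
    have sp: "\<And>n. n \<ge> 1 \<Longrightarrow> 0 < real n powr (v + 1)" by simp
    have s0: "real 0 powr (v + 1) = 0" by simp
    note R = FIN[where s="\<lambda>n. real n powr (v + 1)", OF f0 \<tau> sp s0 h0 t1 t2 t3 t4]
    show "(\<forall>n. integrable (param_measure (nn_K p (k n)))
               (\<lambda>\<theta>. nn_h p (k n) f0 \<theta> * gauss_prod (real n powr (v + 1)) \<tau> (nn_K p (k n)) (\<theta>0 n) \<theta>)) \<and>
        (\<lambda>n. \<integral>\<theta>. nn_h p (k n) f0 \<theta> * gauss_prod (real n powr (v + 1)) \<tau> (nn_K p (k n)) (\<theta>0 n) \<theta>
               \<partial>param_measure (nn_K p (k n))) \<in> o(\<lambda>n. real n powr (- \<delta>))"
      using R by simp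
   qed
  qed
qed


end
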